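(* Let $(X,d)$ be a pointed metric space, let $((x_i,y_i))_{i\in I}$ be a Lipschitz interpolating family in $\widetilde X$ for $\mathrm{Lip}_0(X)$ with Lipschitz interpolation constant $M$, let $T:\mathrm{Lip}_0(X)\to\ell_\infty(I)$ be its Lipschitz interpolating operator, and let $S:\ell_1(I)\to\mathcal F(X)$ be $S(\lambda)=\sum_{i\in I}\lambda_i m_{x_i,y_i}$. The following statements are equivalent: (i) There exists a Beurling set $(f_i)_{i\in I}$ of functions in $\mathrm{Lip}_0(X)$ for $((x_i,y_i))_{i\in I}$. (ii) There exists a bounded linear operator $R:\ell_\infty(I)\to\mathrm{Lip}_0(X)$ which is weak*-to-weak* continuous, with $\|R\|=M$ and $T\circ R=\mathrm{Id}_{\ell_\infty(I)}$. (iii) There exists a bounded linear operator $P:\mathcal F(X)\to\ell_1(I)$ with $\|P\|=M$ and $P\circ S=\mathrm{Id}_{\ell_1(I)}$. (iv) There exists a Lipschitz map $f:X\to\ell_1(I)$ with $f(0)=0$, Lipschitz constant $\|f\|=M$, and $\dfrac{f(x_i)-f(y_i)}{d(x_i,y_i)}=e_i$ for all $i\in I$. (v) There exists a bounded linear operator $R_0:c_0(I)\to\mathrm{Lip}_0(X)$ with $\|R_0\|\leq M$ and $T\circ R_0=\mathrm{Id}_{c_0(I)}$.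
   Context: All spaces are real. $(X,d)$ is a metric space with base point $0$, $\widetilde{X}=\{(x,y)\in X\times X: x\neq y\}$. $\mathrm{Lip}_0(X)$ is the Banach space of Lipschitz $f:X\to\mathbb{R}$ with $f(0)=0$, normed by $\|f\|=\sup_{(x,y)\in\widetilde X}|f(x)-f(y)|/d(x,y)$; similarly for Banach-space-valued maps with $\|\cdot\|$ in place of $|\cdot|$. For $x\in X$, $\delta_x\in\mathrm{Lip}_0(X)^*$ is $\delta_x(f)=f(x)$; the Lipschitz-free space $\mathcal F(X)$ is the closed linear span of $\{\delta_x\}$ in $\mathrm{Lip}_0(X)^*$, and $\mathrm{Lip}_0(X)$ is identified with $\mathcal F(X)^*$ (weak* topology accordingly); $\ell_\infty(I)=\ell_1(I)^*$. For $(x,y)\in\widetilde X$, $m_{x,y}=(\delta_x-\delta_y)/d(x,y)$. $e_i$ are the unit vectors of $\ell_1(I)$. For a family $((x_i,y_i))_{i\in I}$ in $\widetilde X$, $T(f)=\big((f(x_i)-f(y_i))/d(x_i,y_i)\big)_{i\in I}$; the family is Lipschitz interpolating for $\mathrm{Lip}_0(X)$ if $T:\mathrm{Lip}_0(X)\to\ell_\infty(I)$ is surjective, and then its Lipschitz interpolation constant is $M=\inf\{K\geq 1: \forall \alpha\in\ell_\infty(I), \|\alpha\|_\infty\le1,\ \exists f\in\mathrm{Lip}_0(X),\ \|f\|\le K,\ T(f)=\alpha\}$ (note $T$ maps $\mathrm{Lip}_0(X)$ into $\ell_\infty(I)\supseteq c_0(I)$). A Beurling set of functions in $\mathrm{Lip}_0(X)$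 for such a family is a family $(f_i)_{i\in I}$ of functions $f_i:X\to\mathbb R$ with $f_i(0)=0$, $(f_i(x_j)-f_i(y_j))/d(x_j,y_j)=\delta_{ij}$ for all $i,j\in I$, and $\sup_{(x,y)\in\widetilde X}\sum_{i\in I}|f_i(x)-f_i(y)|/d(x,y)\leq M$. *)

theory Defs
  imports "HOL-Analysis.Analysis"
begin

text \<open>All spaces are real function spaces.  X is the metric-space type 'a with base point x0,
  the index set I is the type 'i.\<close>

definition lip_const :: "('b \<Rightarrow> real) \<Rightarrow> ('a::metric_space \<Rightarrow> 'b) \<Rightarrow> ('b \<Rightarrow> 'b \<Rightarrow> 'b) \<Rightarrow> real" where
  "lip_const N f sub = Sup (insert 0 {N (sub (f p) (f q)) / dist p q | p q. p \<noteq> q})"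

definition lipnorm :: "('a::metric_space \<Rightarrow> real) \<Rightarrow> real" where
  "lipnorm f = Sup (insert 0 {\<bar>f p - f q\<bar> / dist p q | p q. p \<noteq> q})"

definition Lip0 :: "'a::metric_space \<Rightarrow> ('a \<Rightarrow> real) set" where
  "Lip0 x0 = {f. f x0 = 0 \<and> (\<exists>K. \<forall>p q. \<bar>f p - f q\<bar> \<le> K * dist p q)}"

definition ell_inf :: "('i \<Rightarrow> real) set" where
  "ell_inf = {\<alpha>. \<exists>K. \<forall>i. \<bar>\<alpha> i\<bar> \<le> K}"

definition linf_norm :: "('i \<Rightarrow> real) \<Rightarrow> real" where
  "linf_norm \<alpha> = Sup (insert 0 (range (\<lambda>i. \<bar>\<alpha> i\<bar>)))"

definition ell_1 :: "('i \<Rightarrow> real) set" where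
  "ell_1 = {\<mu>. (\<lambda>i. \<bar>\<mu> i\<bar>) summable_on UNIV}"

definition l1_norm :: "('i \<Rightarrow> real) \<Rightarrow> real" where
  "l1_norm \<mu> = (\<Sum>\<^sub>\<infinity>i. \<bar>\<mu> i\<bar>)"

definition c_0 :: "('i \<Rightarrow> real) set" where
  "c_0 = {\<alpha>. \<forall>\<epsilon>>0. finite {i. \<epsilon> \<le> \<bar>\<alpha> i\<bar>}}"

text \<open>Elements of Lip_0(X)^* are represented as functionals on 'a \<Rightarrow> real that vanish outside Lip_0(X).\<close>
definition delta :: "'a::metric_space \<Rightarrow> 'a \<Rightarrow> (('a \<Rightarrow> real) \<Rightarrow> real)" where
  "delta x0 p = (\<lambda>f. if f \<in> Lip0 x0 then f p else 0)"

definition mol :: "'a::metric_space \<Rightarrow> 'a \<Rightarrow> 'a \<Rightarrow> (('a \<Rightarrow> real) \<Rightarrow> real)" where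
  "mol x0 p q = (\<lambda>f. (delta x0 p f - delta x0 q f) / dist p q)"

definition dual_norm :: "'a::metric_space \<Rightarrow> (('a \<Rightarrow> real) \<Rightarrow> real) \<Rightarrow> real" where
  "dual_norm x0 \<phi> = Sup (insert 0 {\<bar>\<phi> f\<bar> | f. f \<in> Lip0 x0 \<and> lipnorm f \<le> 1})"

definition delta_span :: "'a::metric_space \<Rightarrow> (('a \<Rightarrow> real) \<Rightarrow> real) set" where
  "delta_span x0 = {(\<lambda>f. \<Sum>p\<in>A. c p * delta x0 p f) | A c. finite A}"

text \<open>Lipschitz-free space: norm closure of delta_span in Lip_0(X)^*.\<close>
definition free_space :: "'a::metric_space \<Rightarrow> (('a \<Rightarrow> real) \<Rightarrow> real) set" where
  "free_space x0 = {\<phi>. (\<forall>f. f \<notin> Lip0 x0 \<longrightarrow> \<phi> f = 0) \<and>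
     (\<forall>\<epsilon>>0. \<exists>\<psi>\<in>delta_span x0. \<forall>f\<in>Lip0 x0. \<bar>\<phi> f - \<psi> f\<bar> \<le> \<epsilon> * lipnorm f)}"

definition interp_op :: "('i \<Rightarrow> 'a::metric_space) \<Rightarrow> ('i \<Rightarrow> 'a) \<Rightarrow> ('a \<Rightarrow> real) \<Rightarrow> ('i \<Rightarrow> real)" where
  "interp_op x y f = (\<lambda>i. (f (x i) - f (y i)) / dist (x i) (y i))"

definition synth_op :: "'a::metric_space \<Rightarrow> ('i \<Rightarrow> 'a) \<Rightarrow> ('i \<Rightarrow> 'a) \<Rightarrow> ('i \<Rightarrow> real) \<Rightarrow> (('a \<Rightarrow> real) \<Rightarrow> real)" where
  "synth_op x0 x y \<mu> = (\<lambda>f. \<Sum>\<^sub>\<infinity>i. \<mu> i * mol x0 (x i) (y i) f)"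

definition lip_interpolating :: "'a::metric_space \<Rightarrow> ('i \<Rightarrow> 'a) \<Rightarrow> ('i \<Rightarrow> 'a) \<Rightarrow> bool" where
  "lip_interpolating x0 x y \<longleftrightarrow> (\<forall>i. x i \<noteq> y i) \<and>
     (\<forall>\<alpha>\<in>ell_inf. \<exists>f\<in>Lip0 x0. interp_op x y f = \<alpha>)"

definition interp_const :: "'a::metric_space \<Rightarrow> ('i \<Rightarrow> 'a) \<Rightarrow> ('i \<Rightarrow> 'a) \<Rightarrow> real" where
  "interp_const x0 x y = Inf {K. 1 \<le> K \<and> (\<forall>\<alpha>\<in>ell_inf. linf_norm \<alpha> \<le> 1 \<longrightarrow>
       (\<exists>f\<in>Lip0 x0. lipnorm f \<le> K \<and> interp_op x y f = \<alpha>))}"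

definition beurling_set :: "'a::metric_space \<Rightarrow> ('i \<Rightarrow> 'a) \<Rightarrow> ('i \<Rightarrow> 'a) \<Rightarrow> real \<Rightarrow> ('i \<Rightarrow> 'a \<Rightarrow> real) \<Rightarrow> bool" where
  "beurling_set x0 x y M F \<longleftrightarrow> (\<forall>i. F i x0 = 0) \<and>
     (\<forall>i j. (F i (x j) - F i (y j)) / dist (x j) (y j) = (if i = j then 1 else 0)) \<and>
     (\<forall>p q. p \<noteq> q \<longrightarrow> (\<lambda>i. \<bar>F i p - F i q\<bar> / dist p q) summable_on UNIV \<and>
        (\<Sum>\<^sub>\<infinity>i. \<bar>F i p - F i q\<bar> / dist p q) \<le> M)"

definition linear_on :: "('b \<Rightarrow> real) set \<Rightarrow> (('b \<Rightarrow> real) \<Rightarrow> ('c \<Rightarrow> real)) \<Rightarrow> bool" where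
  "linear_on A L \<longleftrightarrow> (\<forall>a b. \<forall>u\<in>A. \<forall>v\<in>A. L (\<lambda>s. a * u s + b * v s) = (\<lambda>t. a * L u t + b * L v t))"

definition bounded_on :: "'b set \<Rightarrow> ('b \<Rightarrow> real) \<Rightarrow> ('c \<Rightarrow> real) \<Rightarrow> ('b \<Rightarrow> 'c) \<Rightarrow> bool" where
  "bounded_on A nA nB L \<longleftrightarrow> (\<exists>K. \<forall>u\<in>A. nB (L u) \<le> K * nA u)"

definition opnorm_on :: "'b set \<Rightarrow> ('b \<Rightarrow> real) \<Rightarrow> ('c \<Rightarrow> real) \<Rightarrow> ('b \<Rightarrow> 'c) \<Rightarrow> real" where
  "opnorm_on A nA nB L = Sup (insert 0 ((\<lambda>u. nB (L u) / nA u) ` A))"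

definition wstar_linf :: "('i \<Rightarrow> real) topology" where
  "wstar_linf = topology_generated_by
     {{\<alpha>\<in>ell_inf. (\<Sum>\<^sub>\<infinity>i. \<alpha> i * \<mu> i) \<in> U} | \<mu> U. \<mu> \<in> ell_1 \<and> open U}"

definition wstar_lip :: "'a::metric_space \<Rightarrow> ('a \<Rightarrow> real) topology" where
  "wstar_lip x0 = topology_generated_by
     {{f\<in>Lip0 x0. \<phi> f \<in> U} | \<phi> U. \<phi> \<in> free_space x0 \<and> open U}"

end

theory Submission
  imports Defs
begin


lemma Lip0_I:
  assumes "f x0 = 0" "\<And>p q. \<bar>f p - f q\<bar> \<le> K * dist p q"
  shows "f \<in> Lip0 x0"
  using assms unfolding Lip0_def by blast

lemma Lip0_bdd:
  assumes "f \<in> Lip0 x0"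
  shows "bdd_above (insert 0 {\<bar>f p - f q\<bar> / dist p q | p q. p \<noteq> q})"
proof -
  obtain K where K: "\<And>p q. \<bar>f p - f q\<bar> \<le> K * dist p q" using assms unfolding Lip0_def by blast
  have "\<bar>f p - f q\<bar> / dist p q \<le> max K 0" if "p \<noteq> q" for p q
  proof -
    have "dist p q > 0" using that by simp
    then have "\<bar>f p - f q\<bar> / dist p q \<le> K" using K[of p q] by (simp add: divide_le_eq)
    then show ?thesis by simp
  qed
  then show ?thesis unfolding bdd_above_def by (intro exI[of _ "max K 0"]) auto
qed

lemma lipnorm_nonneg: "f \<in> Lip0 x0 \<Longrightarrow> 0 \<le> lipnorm f"
  unfolding lipnorm_def by (rule cSup_upper[OF _ Lip0_bdd]) auto

lemma lipnorm_bound: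
  assumes "f \<in> Lip0 x0"
  shows "\<bar>f p - f q\<bar> \<le> lipnorm f * dist p q"
proof (cases "p = q")
  case True then show ?thesis by simp
next
  case False
  then have d: "dist p q > 0" by simp
  have "\<bar>f p - f q\<bar> / dist p q \<le> lipnorm f"
    unfolding lipnorm_def by (rule cSup_upper[OF _ Lip0_bdd[OF assms]]) (use False in auto)
  then show ?thesis using d by (simp add: divide_le_eq)
qed

lemma lipnorm_le:
  assumes "\<And>p q. p \<noteq> q \<Longrightarrow> \<bar>f p - f q\<bar> \<le> C * dist p q" "0 \<le> C"
  shows "lipnorm f \<le> C"
  unfolding lipnorm_def
proof (rule cSup_least)
  fix z assume "z \<in> insert 0 {\<bar>f p - f q\<bar> / dist p q | p q. p \<noteq> q}"
  then show "z \<le> C"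
  proof
    assume "z = 0" then show ?thesis using assms by simp
  next
    assume "z \<in> {\<bar>f p - f q\<bar> / dist p q | p q. p \<noteq> q}"
    then obtain p q where "p \<noteq> q" "z = \<bar>f p - f q\<bar> / dist p q" by blast
    then show ?thesis using assms(1)[of p q] by (simp add: divide_le_eq)
  qed
qed auto

lemma Lip0_lin:
  assumes "f \<in> Lip0 x0" "g \<in> Lip0 x0"
  shows "(\<lambda>p. a * f p + b * g p) \<in> Lip0 x0"
proof (rule Lip0_I)
  show "a * f x0 + b * g x0 = 0" using assms unfolding Lip0_def by simp
  fix p q
  have "\<bar>(a * f p + b * g p) - (a * f q + b * g q)\<bar> \<le> \<bar>a\<bar> * \<bar>f p - f q\<bar> + \<bar>b\<bar> * \<bar>g p - g q\<bar>"
    by (metis abs_mult abs_triangle_ineq add_diff_add right_diff_distrib)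
  also have "\<dots> \<le> \<bar>a\<bar> * (lipnorm f * dist p q) + \<bar>b\<bar> * (lipnorm g * dist p q)"
    by (intro add_mono mult_left_mono lipnorm_bound[OF assms(1)] lipnorm_bound[OF assms(2)]) auto
  also have "\<dots> = (\<bar>a\<bar> * lipnorm f + \<bar>b\<bar> * lipnorm g) * dist p q" by algebra
  finally show "\<bar>(a * f p + b * g p) - (a * f q + b * g q)\<bar> \<le> (\<bar>a\<bar> * lipnorm f + \<bar>b\<bar> * lipnorm g) * dist p q" .
qed

lemma Lip0_zero: "(\<lambda>p. 0) \<in> Lip0 x0"
  by (rule Lip0_I[where K=0]) auto

lemma Lip0_sum:
  assumes "finite G" "\<And>i. i \<in> G \<Longrightarrow> g i \<in> Lip0 x0"
  shows "(\<lambda>p. \<Sum>i\<in>G. c i * g i p) \<in> Lip0 x0"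
  using assms
proof (induction G rule: finite_induct)
  case empty then show ?case using Lip0_zero by simp
next
  case (insert k G)
  have "(\<lambda>p. 1 * (\<Sum>i\<in>G. c i * g i p) + c k * g k p) \<in> Lip0 x0"
    by (rule Lip0_lin) (use insert in auto)
  then show ?case using insert by (simp add: add.commute)
qed

lemma linf_bdd: "\<alpha> \<in> ell_inf \<Longrightarrow> bdd_above (insert 0 (range (\<lambda>i. \<bar>\<alpha> i\<bar>)))"
proof -
  assume "\<alpha> \<in> ell_inf"
  then obtain K where K: "\<And>i. \<bar>\<alpha> i\<bar> \<le> K" unfolding ell_inf_def by blast
  show ?thesis unfolding bdd_above_def
    by (rule exI[of _ "max 0 K"]) (auto simp: le_max_iff_disj K)
qed

lemma linf_ge: "\<alpha> \<in> ell_inf \<Longrightarrow> \<bar>\<alpha> i\<bar> \<le> linf_norm \<alpha>"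
  unfolding linf_norm_def by (rule cSup_upper[OF _ linf_bdd]) auto

lemma linf_nonneg: "\<alpha> \<in> ell_inf \<Longrightarrow> 0 \<le> linf_norm \<alpha>"
  unfolding linf_norm_def by (rule cSup_upper[OF _ linf_bdd]) auto

lemma linf_le: "(\<And>i. \<bar>\<alpha> i\<bar> \<le> C) \<Longrightarrow> 0 \<le> C \<Longrightarrow> linf_norm \<alpha> \<le> C"
  unfolding linf_norm_def by (rule cSup_least) auto

lemma c0_sub: "c_0 \<subseteq> ell_inf"
proof
  fix \<alpha> :: "'i \<Rightarrow> real" assume "\<alpha> \<in> c_0"
  define B where "B = {k. 1 \<le> \<bar>\<alpha> k\<bar>}"
  then have fin: "finite B" using \<open>\<alpha> \<in> c_0\<close> unfolding c_0_def by auto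
  have "\<bar>\<alpha> i\<bar> \<le> 1 + (\<Sum>j\<in>B. \<bar>\<alpha> j\<bar>)" for i
  proof (cases "1 \<le> \<bar>\<alpha> i\<bar>")
    case True
    then have "\<bar>\<alpha> i\<bar> \<le> (\<Sum>j\<in>B. \<bar>\<alpha> j\<bar>)"
      using member_le_sum[OF _ _ fin, of i "\<lambda>j. \<bar>\<alpha> j\<bar>"] by (auto simp: B_def)
    then show ?thesis by simp
  next
    case False
    have "0 \<le> (\<Sum>j\<in>B. \<bar>\<alpha> j\<bar>)" by (rule sum_nonneg) auto
    then show ?thesis using False by linarith
  qed
  then show "\<alpha> \<in> ell_inf" unfolding ell_inf_def by blast
qed

lemma finsupp_c0: "finite G \<Longrightarrow> (\<And>i. i \<notin> G \<Longrightarrow> \<alpha> i = 0) \<Longrightarrow> \<alpha> \<in> c_0"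
  unfolding c_0_def mem_Collect_eq
proof (intro allI impI)
  fix \<epsilon> :: real assume "finite G" "\<And>i. i \<notin> G \<Longrightarrow> \<alpha> i = 0" "0 < \<epsilon>"
  then have "{i. \<epsilon> \<le> \<bar>\<alpha> i\<bar>} \<subseteq> G" by force
  then show "finite {i. \<epsilon> \<le> \<bar>\<alpha> i\<bar>}" using \<open>finite G\<close> finite_subset by blast
qed

lemma opnorm_bdd:
  assumes "bounded_on A nA nB L" "\<And>u. u \<in> A \<Longrightarrow> 0 \<le> nA u"
  shows "bdd_above (insert 0 ((\<lambda>u. nB (L u) / nA u) ` A))"
proof -
  obtain K where K: "\<And>u. u \<in> A \<Longrightarrow> nB (L u) \<le> K * nA u" using assms unfolding bounded_on_def by blast
  have "nB (L u) / nA u \<le> max K 0" if "u \<in> A" for u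
  proof (cases "nA u = 0")
    case True then show ?thesis by simp
  next
    case False
    then have "nA u > 0" using assms(2)[OF that] by simp
    then have "nB (L u) / nA u \<le> K" using K[OF that] by (simp add: divide_le_eq)
    then show ?thesis by simp
  qed
  then show ?thesis unfolding bdd_above_def by (intro exI[of _ "max K 0"]) auto
qed

lemma opnorm_nonneg:
  assumes "bounded_on A nA nB L" "\<And>u. u \<in> A \<Longrightarrow> 0 \<le> nA u"
  shows "0 \<le> opnorm_on A nA nB L"
  unfolding opnorm_on_def by (rule cSup_upper[OF _ opnorm_bdd[OF assms]]) auto

lemma opnorm_bound:
  assumes "bounded_on A nA nB L" "\<And>u. u \<in> A \<Longrightarrow> 0 \<le> nA u" "u \<in> A" "0 < nA u"
  shows "nB (L u) \<le> opnorm_on A nA nB L * nA u"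
proof -
  have "nB (L u) / nA u \<le> opnorm_on A nA nB L"
    unfolding opnorm_on_def by (rule cSup_upper[OF _ opnorm_bdd[OF assms(1,2)]]) (use assms in auto)
  then show ?thesis using assms(4) by (simp add: divide_le_eq)
qed

lemma opnorm_le:
  assumes "\<And>u. u \<in> A \<Longrightarrow> 0 < nA u \<Longrightarrow> nB (L u) \<le> C * nA u" "0 \<le> C"
    "\<And>u. u \<in> A \<Longrightarrow> 0 \<le> nA u"
  shows "opnorm_on A nA nB L \<le> C"
  unfolding opnorm_on_def
proof (rule cSup_least)
  fix z assume "z \<in> insert 0 ((\<lambda>u. nB (L u) / nA u) ` A)"
  then show "z \<le> C"
  proof
    assume "z = 0" then show ?thesis using assms by simp
  next
    assume "z \<in> (\<lambda>u. nB (L u) / nA u) ` A"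
    then obtain u where u: "u \<in> A" "z = nB (L u) / nA u" by blast
    show ?thesis
    proof (cases "0 < nA u")
      case True then show ?thesis using assms(1)[OF u(1) True] u(2) by (simp add: divide_le_eq)
    next
      case False
      then have "nA u = 0" using assms(3)[OF u(1)] by simp
      then show ?thesis using u assms by simp
    qed
  qed
qed auto



lemma eps_le0:
  fixes D C :: real
  assumes "\<And>\<epsilon>. \<epsilon> > 0 \<Longrightarrow> D \<le> \<epsilon> * C" "0 \<le> C"
  shows "D \<le> 0"
proof (rule ccontr)
  assume "\<not> D \<le> 0"
  then have D: "D > 0" by simp
  show False
  proof (cases "C = 0")
    case True then show False using assms(1)[of 1] D by simp
  next
    case False
    then have C: "C > 0" using assms(2) by simp
    have "D \<le> (D / (2 * C)) * C" using assms(1)[of "D / (2*C)"] D C by simp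
    also have "\<dots> = D / 2" using C by simp
    finally show False using D by simp
  qed
qed

lemma delta_Lip0: "f \<in> Lip0 x0 \<Longrightarrow> delta x0 p f = f p"
  unfolding delta_def by simp

lemma delta_span_lin:
  assumes "\<psi> \<in> delta_span x0" "g \<in> Lip0 x0" "h \<in> Lip0 x0"
  shows "\<psi> (\<lambda>p. a * g p + b * h p) = a * \<psi> g + b * \<psi> h"
proof -
  obtain A c where \<psi>: "\<psi> = (\<lambda>f. \<Sum>p\<in>A. c p * delta x0 p f)" "finite A"
    using assms(1) unfolding delta_span_def by blast
  have gh: "(\<lambda>p. a * g p + b * h p) \<in> Lip0 x0" by (rule Lip0_lin[OF assms(2,3)])
  show ?thesis unfolding \<psi> using gh assms(2,3)
    by (simp add: delta_Lip0 sum_distrib_left sum.distrib algebra_simps)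
qed

lemma fs_out: "\<phi> \<in> free_space x0 \<Longrightarrow> f \<notin> Lip0 x0 \<Longrightarrow> \<phi> f = 0"
  unfolding free_space_def by blast

lemma fs_approx:
  assumes "\<phi> \<in> free_space x0" "\<epsilon> > 0"
  obtains \<psi> where "\<psi> \<in> delta_span x0" "\<And>f. f \<in> Lip0 x0 \<Longrightarrow> \<bar>\<phi> f - \<psi> f\<bar> \<le> \<epsilon> * lipnorm f"
  using assms unfolding free_space_def by blast

lemma fs_lin:
  assumes "\<phi> \<in> free_space x0" "g \<in> Lip0 x0" "h \<in> Lip0 x0"
  shows "\<phi> (\<lambda>p. a * g p + b * h p) = a * \<phi> g + b * \<phi> h"
proof -
  define k where "k = (\<lambda>p. a * g p + b * h p)"
  have k: "k \<in> Lip0 x0" unfolding k_def by (rule Lip0_lin[OF assms(2,3)])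
  define C where "C = lipnorm k + \<bar>a\<bar> * lipnorm g + \<bar>b\<bar> * lipnorm h"
  have C: "0 \<le> C" unfolding C_def using lipnorm_nonneg[OF k] lipnorm_nonneg[OF assms(2)]
      lipnorm_nonneg[OF assms(3)] by simp
  have "\<bar>\<phi> k - (a * \<phi> g + b * \<phi> h)\<bar> \<le> \<epsilon> * C" if e: "\<epsilon> > 0" for \<epsilon>
  proof -
    obtain \<psi> where \<psi>: "\<psi> \<in> delta_span x0" "\<And>f. f \<in> Lip0 x0 \<Longrightarrow> \<bar>\<phi> f - \<psi> f\<bar> \<le> \<epsilon> * lipnorm f"
      using fs_approx[OF assms(1) e] by blast
    have lin: "\<psi> k = a * \<psi> g + b * \<psi> h" unfolding k_def by (rule delta_span_lin[OF \<psi>(1) assms(2,3)])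
    have "\<bar>\<phi> k - (a * \<phi> g + b * \<phi> h)\<bar> = \<bar>(\<phi> k - \<psi> k) - a * (\<phi> g - \<psi> g) - b * (\<phi> h - \<psi> h)\<bar>"
      using lin by (simp add: algebra_simps)
    also have "\<dots> \<le> \<bar>\<phi> k - \<psi> k\<bar> + \<bar>a * (\<phi> g - \<psi> g)\<bar> + \<bar>b * (\<phi> h - \<psi> h)\<bar>"
      by linarith
    also have "\<dots> = \<bar>\<phi> k - \<psi> k\<bar> + \<bar>a\<bar> * \<bar>\<phi> g - \<psi> g\<bar> + \<bar>b\<bar> * \<bar>\<phi> h - \<psi> h\<bar>"
      by (simp add: abs_mult)
    also have "\<dots> \<le> \<epsilon> * lipnorm k + \<bar>a\<bar> * (\<epsilon> * lipnorm g) + \<bar>b\<bar> * (\<epsilon> * lipnorm h)"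
      by (intro add_mono mult_left_mono \<psi>(2) k assms(2,3)) auto
    also have "\<dots> = \<epsilon> * C" unfolding C_def by (simp add: algebra_simps)
    finally show ?thesis .
  qed
  then have "\<bar>\<phi> k - (a * \<phi> g + b * \<phi> h)\<bar> \<le> 0" using eps_le0[OF _ C] by blast
  then show ?thesis unfolding k_def by simp
qed

lemma fs_zero: "\<phi> \<in> free_space x0 \<Longrightarrow> \<phi> (\<lambda>p. 0) = 0"
  using fs_lin[OF _ Lip0_zero Lip0_zero, of \<phi> x0 0 0] by simp

lemma fs_sum:
  assumes "\<phi> \<in> free_space x0" "finite G" "\<And>i. i \<in> G \<Longrightarrow> g i \<in> Lip0 x0"
  shows "\<phi> (\<lambda>p. \<Sum>i\<in>G. c i * g i p) = (\<Sum>i\<in>G. c i * \<phi> (g i))"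
  using assms(2,3)
proof (induction G rule: finite_induct)
  case empty then show ?case using fs_zero[OF assms(1)] by simp
next
  case (insert k G)
  have "\<phi> (\<lambda>p. 1 * (\<Sum>i\<in>G. c i * g i p) + c k * g k p) = 1 * \<phi> (\<lambda>p. \<Sum>i\<in>G. c i * g i p) + c k * \<phi> (g k)"
  proof (rule fs_lin[OF assms(1)])
    show "(\<lambda>p. \<Sum>i\<in>G. c i * g i p) \<in> Lip0 x0" by (rule Lip0_sum) (use insert in auto)
  qed (use insert in auto)
  then show ?case using insert by (simp add: add.commute)
qed

lemma dual_bdd:
  assumes "\<phi> \<in> free_space x0"
  shows "bdd_above (insert 0 {\<bar>\<phi> f\<bar> | f. f \<in> Lip0 x0 \<and> lipnorm f \<le> 1})"
proof -
  obtain \<psi> where \<psi>: "\<psi> \<in> delta_span x0" "\<And>f. f \<in> Lip0 x0 \<Longrightarrow> \<bar>\<phi> f - \<psi> f\<bar> \<le> 1 * lipnorm f"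
    using fs_approx[OF assms, of 1] by auto
  obtain A c where \<psi>': "\<psi> = (\<lambda>f. \<Sum>p\<in>A. c p * delta x0 p f)" "finite A"
    using \<psi>(1) unfolding delta_span_def by blast
  define B where "B = (\<Sum>p\<in>A. \<bar>c p\<bar> * dist p x0) + 1"
  have "\<bar>\<phi> f\<bar> \<le> B" if f: "f \<in> Lip0 x0" "lipnorm f \<le> 1" for f
  proof -
    have fx0: "f x0 = 0" using f unfolding Lip0_def by simp
    have "\<bar>\<psi> f\<bar> \<le> (\<Sum>p\<in>A. \<bar>c p * f p\<bar>)" unfolding \<psi>' using f by (simp add: delta_Lip0 sum_abs)
    also have "\<dots> \<le> (\<Sum>p\<in>A. \<bar>c p\<bar> * dist p x0)"
    proof (rule sum_mono)
      fix p
      have "\<bar>f p\<bar> \<le> lipnorm f * dist p x0" using lipnorm_bound[OF f(1), of p x0] fx0 by simp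
      also have "\<dots> \<le> dist p x0" using mult_right_mono[OF f(2) zero_le_dist[of p x0]] by simp
      finally show "\<bar>c p * f p\<bar> \<le> \<bar>c p\<bar> * dist p x0" by (simp add: abs_mult mult_left_mono)
    qed
    finally have "\<bar>\<psi> f\<bar> \<le> (\<Sum>p\<in>A. \<bar>c p\<bar> * dist p x0)" .
    moreover have "\<bar>\<phi> f - \<psi> f\<bar> \<le> 1" using \<psi>(2)[OF f(1)] f(2) by simp
    ultimately show ?thesis unfolding B_def by linarith
  qed
  moreover have "0 \<le> B" unfolding B_def by (simp add: sum_nonneg)
  ultimately show ?thesis unfolding bdd_above_def by (intro exI[of _ B]) auto
qed

lemma dual_nonneg: "\<phi> \<in> free_space x0 \<Longrightarrow> 0 \<le> dual_norm x0 \<phi>"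
  unfolding dual_norm_def by (rule cSup_upper[OF _ dual_bdd]) auto

lemma dual_ge: "\<phi> \<in> free_space x0 \<Longrightarrow> f \<in> Lip0 x0 \<Longrightarrow> lipnorm f \<le> 1 \<Longrightarrow> \<bar>\<phi> f\<bar> \<le> dual_norm x0 \<phi>"
  unfolding dual_norm_def by (rule cSup_upper[OF _ dual_bdd]) auto

lemma fs_bound:
  assumes "\<phi> \<in> free_space x0" "g \<in> Lip0 x0"
  shows "\<bar>\<phi> g\<bar> \<le> dual_norm x0 \<phi> * lipnorm g"
proof (cases "lipnorm g = 0")
  case True
  have "g = (\<lambda>p. 0)"
  proof
    fix p show "g p = 0"
      using lipnorm_bound[OF assms(2), of p x0] True assms(2) unfolding Lip0_def by simp
  qed
  then show ?thesis using fs_zero[OF assms(1)] True by simp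
next
  case False
  define L where "L = lipnorm g"
  have L: "L > 0" using False lipnorm_nonneg[OF assms(2)] unfolding L_def by simp
  define h where "h = (\<lambda>p. (1/L) * g p + 0 * g p)"
  have h: "h \<in> Lip0 x0" unfolding h_def by (rule Lip0_lin[OF assms(2,2)])
  have "lipnorm h \<le> 1"
  proof (rule lipnorm_le)
    fix p q :: 'a
    have hp: "\<bar>h p - h q\<bar> = \<bar>g p - g q\<bar> / L" unfolding h_def using L by (simp add: field_simps)
    have "\<bar>g p - g q\<bar> \<le> L * dist p q" using lipnorm_bound[OF assms(2), of p q] unfolding L_def .
    then show "\<bar>h p - h q\<bar> \<le> 1 * dist p q" unfolding hp using L by (simp add: divide_le_eq mult.commute)
  qed simp
  then have "\<bar>\<phi> h\<bar> \<le> dual_norm x0 \<phi>" by (rule dual_ge[OF assms(1) h])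
  moreover have "\<phi> h = (1/L) * \<phi> g" unfolding h_def using fs_lin[OF assms(1,2,2), of "1/L" 0] by simp
  ultimately have "\<bar>\<phi> g\<bar> / L \<le> dual_norm x0 \<phi>" using L by (simp add: abs_mult)
  then show ?thesis using L unfolding L_def by (simp add: divide_le_eq mult.commute)
qed

lemma delta_span_fs:
  assumes "\<psi> \<in> delta_span x0"
  shows "\<psi> \<in> free_space x0"
proof -
  obtain A c where \<psi>: "\<psi> = (\<lambda>f. \<Sum>p\<in>A. c p * delta x0 p f)" "finite A"
    using assms unfolding delta_span_def by blast
  have "\<forall>f. f \<notin> Lip0 x0 \<longrightarrow> \<psi> f = 0" unfolding \<psi> delta_def by simp
  moreover have "\<forall>\<epsilon>>0. \<exists>\<psi>'\<in>delta_span x0. \<forall>f\<in>Lip0 x0. \<bar>\<psi> f - \<psi>' f\<bar> \<le> \<epsilon> * lipnorm f"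
    using assms by (intro allI impI bexI[of _ \<psi>]) (auto intro!: mult_nonneg_nonneg lipnorm_nonneg)
  ultimately show ?thesis unfolding free_space_def by blast
qed

lemma delta_fs: "delta x0 p \<in> free_space x0"
proof (rule delta_span_fs)
  show "delta x0 p \<in> delta_span x0" unfolding delta_span_def
    by (intro CollectI exI[of _ "{p}"] exI[of _ "\<lambda>_. 1"]) auto
qed

lemma mol_fs:
  assumes "p \<noteq> q"
  shows "mol x0 p q \<in> free_space x0"
proof (rule delta_span_fs)
  show "mol x0 p q \<in> delta_span x0" unfolding delta_span_def
    apply (intro CollectI exI[of _ "{p, q}"] exI[of _ "\<lambda>z. if z = p then 1 / dist p q else - 1 / dist p q"])
    using assms by (auto simp: mol_def fun_eq_iff diff_divide_distrib)
qed

lemma mol_eq: "mol x0 p q = (\<lambda>s. (1 / dist p q) * delta x0 p s + (- 1 / dist p q) * delta x0 q s)"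
  unfolding mol_def by (auto simp: fun_eq_iff diff_divide_distrib)

lemma dual_mol:
  assumes "p \<noteq> q"
  shows "dual_norm x0 (mol x0 p q) = 1"
proof (rule antisym)
  show "dual_norm x0 (mol x0 p q) \<le> 1" unfolding dual_norm_def
  proof (rule cSup_least)
    fix z assume "z \<in> insert 0 {\<bar>mol x0 p q f\<bar> |f. f \<in> Lip0 x0 \<and> lipnorm f \<le> 1}"
    then show "z \<le> 1"
    proof
      assume "z \<in> {\<bar>mol x0 p q f\<bar> |f. f \<in> Lip0 x0 \<and> lipnorm f \<le> 1}"
      then obtain f where f: "f \<in> Lip0 x0" "lipnorm f \<le> 1" "z = \<bar>mol x0 p q f\<bar>" by blast
      have d: "dist p q > 0" using assms by simp
      have "z = \<bar>f p - f q\<bar> / dist p q" using f unfolding mol_def delta_def by simp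
      also have "\<dots> \<le> (1 * dist p q) / dist p q"
        using lipnorm_bound[OF f(1), of p q] f(2) d
        by (intro divide_right_mono) (auto intro: order_trans mult_right_mono)
      finally show ?thesis using d by simp
    qed simp
  qed simp
next
  define g where "g = (\<lambda>z. dist z p - dist x0 p)"
  have gb: "\<bar>g a - g b\<bar> \<le> 1 * dist a b" for a b
    unfolding g_def using abs_dist_diff_le[of a p b] by (simp add: dist_commute)
  have g: "g \<in> Lip0 x0" by (rule Lip0_I[where K=1]) (use gb in \<open>auto simp: g_def\<close>)
  have "lipnorm g \<le> 1" by (rule lipnorm_le) (use gb in auto)
  then have "\<bar>mol x0 p q g\<bar> \<le> dual_norm x0 (mol x0 p q)" by (rule dual_ge[OF mol_fs[OF assms] g])
  moreover have "mol x0 p q g = -1" using g assms unfolding mol_def delta_def g_def by (simp add: dist_commute)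
  ultimately show "1 \<le> dual_norm x0 (mol x0 p q)" by simp
qed



lemma infsum_diff_real:
  fixes f g :: "'i \<Rightarrow> real"
  assumes "f summable_on A" "g summable_on A"
  shows "infsum (\<lambda>i. f i - g i) A = infsum f A - infsum g A"
proof -
  have "infsum (\<lambda>i. f i + (- g i)) A = infsum f A + infsum (\<lambda>i. - g i) A"
    by (rule infsum_add[OF assms(1) summable_on_uminus[THEN iffD2, OF assms(2)]])
  then show ?thesis by (simp add: infsum_uminus)
qed

lemma summable_diff_real:
  fixes f g :: "'i \<Rightarrow> real"
  assumes "f summable_on A" "g summable_on A"
  shows "(\<lambda>i. f i - g i) summable_on A"
  using summable_on_add[OF assms(1) summable_on_uminus[THEN iffD2, OF assms(2)]] by simp

lemma infsum_single_real:
  fixes c :: "'i \<Rightarrow> real"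
  shows "(\<Sum>\<^sub>\<infinity>i. (if i = j then c i else 0)) = c j"
proof -
  have "(\<Sum>\<^sub>\<infinity>i. (if i = j then c i else 0)) = (\<Sum>\<^sub>\<infinity>i\<in>{j}. (if i = j then c i else 0))"
    by (rule infsum_cong_neutral) auto
  then show ?thesis by simp
qed

lemma summable_single_real:
  fixes c :: "'i \<Rightarrow> real"
  shows "(\<lambda>i. if i = j then c i else 0) summable_on A"
  by (rule finite_nonzero_values_imp_summable_on) (rule finite_subset[of _ "{j}"], auto)

lemma infsum_le_real:
  fixes f :: "'i \<Rightarrow> real"
  assumes "\<And>i. 0 \<le> f i" "\<And>G. finite G \<Longrightarrow> sum f G \<le> B"
  shows "f summable_on UNIV" "infsum f UNIV \<le> B"
proof -
  show s: "f summable_on UNIV"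
    by (rule nonneg_bdd_above_summable_on) (use assms in \<open>auto simp: bdd_above_def\<close>)
  show "infsum f UNIV \<le> B" by (rule infsum_le_finite_sums[OF s]) (use assms in auto)
qed

locale beur =
  fixes x0 :: "'a::metric_space" and x y :: "'i \<Rightarrow> 'a" and N :: real and F :: "'i \<Rightarrow> 'a \<Rightarrow> real"
  assumes B: "beurling_set x0 x y N F"
begin

lemma F0: "F i x0 = 0" using B unfolding beurling_set_def by blast

lemma Fint: "(F i (x j) - F i (y j)) / dist (x j) (y j) = (if i = j then 1 else 0)"
  using B unfolding beurling_set_def by blast

lemma xy: "x j \<noteq> y j"
  using Fint[of j j] by auto

lemma bsum: "p \<noteq> q \<Longrightarrow> (\<lambda>i. \<bar>F i p - F i q\<bar> / dist p q) summable_on UNIV"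
  "p \<noteq> q \<Longrightarrow> (\<Sum>\<^sub>\<infinity>i. \<bar>F i p - F i q\<bar> / dist p q) \<le> N"
  using B unfolding beurling_set_def by blast+

lemma babs: "(\<lambda>i. \<bar>F i p - F i q\<bar>) summable_on UNIV"
proof (cases "p = q")
  case True then show ?thesis by simp
next
  case False
  have "(\<lambda>i. dist p q * (\<bar>F i p - F i q\<bar> / dist p q)) summable_on UNIV"
    by (rule summable_on_cmult_right[OF bsum(1)[OF False]])
  then show ?thesis using False by simp
qed

lemma babs_le: "(\<Sum>\<^sub>\<infinity>i. \<bar>F i p - F i q\<bar>) \<le> N * dist p q"
proof (cases "p = q")
  case True then show ?thesis by simp
next
  case False
  have "(\<Sum>\<^sub>\<infinity>i. dist p q * (\<bar>F i p - F i q\<bar> / dist p q)) = dist p q * (\<Sum>\<^sub>\<infinity>i. \<bar>F i p - F i q\<bar> / dist p q)"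
    by (rule infsum_cmult_right[OF bsum(1)[OF False]])
  also have "\<dots> \<le> dist p q * N" by (rule mult_left_mono[OF bsum(2)[OF False]]) simp
  finally show ?thesis using False by (simp add: mult.commute)
qed

lemma bterm: "\<bar>F i p - F i q\<bar> \<le> N * dist p q"
proof -
  have "sum (\<lambda>i. \<bar>F i p - F i q\<bar>) {i} \<le> (\<Sum>\<^sub>\<infinity>i. \<bar>F i p - F i q\<bar>)"
    by (rule finite_sum_le_infsum[OF babs]) auto
  then have "\<bar>F i p - F i q\<bar> \<le> (\<Sum>\<^sub>\<infinity>i. \<bar>F i p - F i q\<bar>)" by simp
  then show ?thesis using babs_le[of p q] by linarith
qed

lemma N1: "1 \<le> N"
proof -
  fix j
  have "sum (\<lambda>i. \<bar>F i (x j) - F i (y j)\<bar> / dist (x j) (y j)) {j} \<le> (\<Sum>\<^sub>\<infinity>i. \<bar>F i (x j) - F i (y j)\<bar> / dist (x j) (y j))"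
    by (rule finite_sum_le_infsum[OF bsum(1)[OF xy]]) auto
  moreover have "\<bar>F j (x j) - F j (y j)\<bar> / dist (x j) (y j) = 1"
  proof -
    have "\<bar>F j (x j) - F j (y j)\<bar> / dist (x j) (y j) = \<bar>(F j (x j) - F j (y j)) / dist (x j) (y j)\<bar>"
      by (simp add: abs_div)
    then show ?thesis using Fint[of j j] by simp
  qed
  ultimately show ?thesis using bsum(2)[OF xy, of j] by simp
qed

lemma FLip0: "F i \<in> Lip0 x0"
  by (rule Lip0_I[OF F0 bterm])

lemma bpt: "(\<lambda>i. \<bar>F i p\<bar>) summable_on UNIV"
  using babs[of p x0] by (simp add: F0)

definition Rb :: "('i \<Rightarrow> real) \<Rightarrow> 'a \<Rightarrow> real" where
  "Rb \<alpha> = (\<lambda>p. \<Sum>\<^sub>\<infinity>i. \<alpha> i * F i p)"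

lemma ell_inf_abs_summable:
  assumes "\<alpha> \<in> ell_inf" "(\<lambda>i. \<bar>g i\<bar>) summable_on UNIV"
  shows "(\<lambda>i. norm (\<alpha> i * g i)) summable_on UNIV"
proof (rule Infinite_Sum.abs_summable_on_comparison_test)
  show "(\<lambda>i. norm (linf_norm \<alpha> * \<bar>g i\<bar>)) summable_on UNIV"
    using summable_on_cmult_right[OF assms(2), of "linf_norm \<alpha>"] linf_nonneg[OF assms(1)]
    by (simp add: abs_mult)
  fix i
  show "norm (\<alpha> i * g i) \<le> norm (linf_norm \<alpha> * \<bar>g i\<bar>)"
    using linf_ge[OF assms(1), of i] linf_nonneg[OF assms(1)]
    by (simp add: abs_mult mult_right_mono)
qed

lemma ell_inf_summable:
  assumes "\<alpha> \<in> ell_inf" "(\<lambda>i. \<bar>g i\<bar>) summable_on UNIV"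
  shows "(\<lambda>i. \<alpha> i * g i) summable_on UNIV"
  using ell_inf_abs_summable[OF assms] summable_on_iff_abs_summable_on_real by blast

lemma ell_inf_bound:
  assumes "\<alpha> \<in> ell_inf" "(\<lambda>i. \<bar>g i\<bar>) summable_on UNIV"
  shows "\<bar>\<Sum>\<^sub>\<infinity>i. \<alpha> i * g i\<bar> \<le> linf_norm \<alpha> * (\<Sum>\<^sub>\<infinity>i. \<bar>g i\<bar>)"
proof -
  have "\<bar>\<Sum>\<^sub>\<infinity>i. \<alpha> i * g i\<bar> \<le> (\<Sum>\<^sub>\<infinity>i. norm (\<alpha> i * g i))"
    using norm_infsum_bound[OF ell_inf_abs_summable[OF assms]] by simp
  also have "\<dots> \<le> (\<Sum>\<^sub>\<infinity>i. linf_norm \<alpha> * \<bar>g i\<bar>)"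
    by (rule infsum_mono[OF ell_inf_abs_summable[OF assms] summable_on_cmult_right[OF assms(2)]])
       (use linf_ge[OF assms(1)] linf_nonneg[OF assms(1)] in \<open>auto simp: abs_mult mult_right_mono\<close>)
  also have "\<dots> = linf_norm \<alpha> * (\<Sum>\<^sub>\<infinity>i. \<bar>g i\<bar>)" by (rule infsum_cmult_right[OF assms(2)])
  finally show ?thesis .
qed

lemma Rb_diff:
  assumes "\<alpha> \<in> ell_inf"
  shows "Rb \<alpha> p - Rb \<alpha> q = (\<Sum>\<^sub>\<infinity>i. \<alpha> i * (F i p - F i q))"
  unfolding Rb_def
  by (subst infsum_diff_real[symmetric]) (auto intro!: ell_inf_summable[OF assms] bpt simp: algebra_simps)

lemma Rb_bound:
  assumes "\<alpha> \<in> ell_inf"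
  shows "\<bar>Rb \<alpha> p - Rb \<alpha> q\<bar> \<le> (linf_norm \<alpha> * N) * dist p q"
proof -
  have "\<bar>Rb \<alpha> p - Rb \<alpha> q\<bar> \<le> linf_norm \<alpha> * (\<Sum>\<^sub>\<infinity>i. \<bar>F i p - F i q\<bar>)"
    unfolding Rb_diff[OF assms] by (rule ell_inf_bound[OF assms babs])
  also have "\<dots> \<le> linf_norm \<alpha> * (N * dist p q)"
    by (rule mult_left_mono[OF babs_le linf_nonneg[OF assms]])
  finally show ?thesis by (simp add: mult.assoc)
qed

lemma Rb_Lip0: "\<alpha> \<in> ell_inf \<Longrightarrow> Rb \<alpha> \<in> Lip0 x0"
  by (rule Lip0_I[OF _ Rb_bound]) (auto simp: Rb_def F0)

lemma Rb_lipnorm: "\<alpha> \<in> ell_inf \<Longrightarrow> lipnorm (Rb \<alpha>) \<le> linf_norm \<alpha> * N"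
  by (rule lipnorm_le[OF Rb_bound]) (use linf_nonneg N1 in \<open>auto intro!: mult_nonneg_nonneg\<close>)

lemma Rb_T:
  assumes "\<alpha> \<in> ell_inf"
  shows "interp_op x y (Rb \<alpha>) = \<alpha>"
proof
  fix j
  have "interp_op x y (Rb \<alpha>) j = (\<Sum>\<^sub>\<infinity>i. \<alpha> i * (F i (x j) - F i (y j))) * (1 / dist (x j) (y j))"
    unfolding interp_op_def Rb_diff[OF assms] by simp
  also have "\<dots> = (\<Sum>\<^sub>\<infinity>i. \<alpha> i * (F i (x j) - F i (y j)) * (1 / dist (x j) (y j)))"
    by (rule infsum_cmult_left[symmetric]) (auto intro!: ell_inf_summable[OF assms] babs)
  also have "\<dots> = (\<Sum>\<^sub>\<infinity>i. (if i = j then \<alpha> i else 0))"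
  proof (rule infsum_cong)
    fix i
    have "\<alpha> i * (F i (x j) - F i (y j)) * (1 / dist (x j) (y j)) = \<alpha> i * ((F i (x j) - F i (y j)) / dist (x j) (y j))"
      by simp
    then show "\<alpha> i * (F i (x j) - F i (y j)) * (1 / dist (x j) (y j)) = (if i = j then \<alpha> i else 0)"
      using Fint[of i j] by simp
  qed
  also have "\<dots> = \<alpha> j" by (rule infsum_single_real)
  finally show "interp_op x y (Rb \<alpha>) j = \<alpha> j" .
qed

lemma ell_inf_lin: fixes u v :: "'j \<Rightarrow> real" shows "u \<in> ell_inf \<Longrightarrow> v \<in> ell_inf \<Longrightarrow> (\<lambda>s. a * u s + b * v s) \<in> ell_inf"
proof -
  assume "u \<in> ell_inf" "v \<in> ell_inf"
  then obtain K1 K2 where "\<And>i. \<bar>u i\<bar> \<le> K1" "\<And>i. \<bar>v i\<bar> \<le> K2" unfolding ell_inf_def by blast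
  then have "\<bar>a * u i + b * v i\<bar> \<le> \<bar>a\<bar> * K1 + \<bar>b\<bar> * K2" for i
  proof -
    have "\<bar>a * u i + b * v i\<bar> \<le> \<bar>a\<bar> * \<bar>u i\<bar> + \<bar>b\<bar> * \<bar>v i\<bar>"
      by (metis abs_mult abs_triangle_ineq)
    also have "\<dots> \<le> \<bar>a\<bar> * K1 + \<bar>b\<bar> * K2"
      by (intro add_mono mult_left_mono) (use \<open>\<And>i. \<bar>u i\<bar> \<le> K1\<close> \<open>\<And>i. \<bar>v i\<bar> \<le> K2\<close> in auto)
    finally show ?thesis .
  qed
  then show ?thesis unfolding ell_inf_def by blast
qed

lemma Rb_lin: "linear_on ell_inf Rb"
  unfolding linear_on_def
proof (intro allI ballI)
  fix a b :: real and u v :: "'i \<Rightarrow> real" assume u: "u \<in> ell_inf" and v: "v \<in> ell_inf"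
  show "Rb (\<lambda>s. a * u s + b * v s) = (\<lambda>t. a * Rb u t + b * Rb v t)"
  proof
    fix p
    have "Rb (\<lambda>s. a * u s + b * v s) p = (\<Sum>\<^sub>\<infinity>i. a * (u i * F i p) + b * (v i * F i p))"
      unfolding Rb_def by (simp add: algebra_simps)
    also have "\<dots> = (\<Sum>\<^sub>\<infinity>i. a * (u i * F i p)) + (\<Sum>\<^sub>\<infinity>i. b * (v i * F i p))"
      by (rule infsum_add) (auto intro!: summable_on_cmult_right ell_inf_summable u v bpt)
    also have "\<dots> = a * Rb u p + b * Rb v p" unfolding Rb_def
      by (simp add: infsum_cmult_right ell_inf_summable u v bpt)
    finally show "Rb (\<lambda>s. a * u s + b * v s) p = a * Rb u p + b * Rb v p" .
  qed
qed

lemma interp_le: "interp_const x0 x y \<le> N"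
  unfolding interp_const_def
proof (rule cInf_lower)
  show "N \<in> {K. 1 \<le> K \<and> (\<forall>\<alpha>\<in>ell_inf. linf_norm \<alpha> \<le> 1 \<longrightarrow> (\<exists>f\<in>Lip0 x0. lipnorm f \<le> K \<and> interp_op x y f = \<alpha>))}"
  proof (intro CollectI conjI N1 ballI impI)
    fix \<alpha> :: "'i \<Rightarrow> real" assume a: "\<alpha> \<in> ell_inf" "linf_norm \<alpha> \<le> 1"
    have "linf_norm \<alpha> * N \<le> 1 * N" by (rule mult_right_mono[OF a(2)]) (use N1 in simp)
    then have "lipnorm (Rb \<alpha>) \<le> N" using Rb_lipnorm[OF a(1)] by simp
    then show "\<exists>f\<in>Lip0 x0. lipnorm f \<le> N \<and> interp_op x y f = \<alpha>"
      using Rb_Lip0[OF a(1)] Rb_T[OF a(1)] by blast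
  qed
  show "bdd_below {K. 1 \<le> K \<and> (\<forall>\<alpha>\<in>ell_inf. linf_norm \<alpha> \<le> 1 \<longrightarrow> (\<exists>f\<in>Lip0 x0. lipnorm f \<le> K \<and> interp_op x y f = \<alpha>))}"
    unfolding bdd_below_def by (intro exI[of _ 1]) auto
qed

lemma fincomb_Lip0: "finite G \<Longrightarrow> (\<lambda>p. \<Sum>i\<in>G. c i * F i p) \<in> Lip0 x0"
  by (rule Lip0_sum) (auto intro: FLip0)

lemma fincomb_lipnorm:
  assumes "finite G" "\<And>i. \<bar>c i\<bar> \<le> 1"
  shows "lipnorm (\<lambda>p. \<Sum>i\<in>G. c i * F i p) \<le> N"
proof (rule lipnorm_le)
  fix p q :: 'a
  have "\<bar>(\<Sum>i\<in>G. c i * F i p) - (\<Sum>i\<in>G. c i * F i q)\<bar> = \<bar>\<Sum>i\<in>G. c i * (F i p - F i q)\<bar>"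
    by (simp add: sum_subtractf algebra_simps)
  also have "\<dots> \<le> (\<Sum>i\<in>G. \<bar>c i * (F i p - F i q)\<bar>)" by (rule sum_abs)
  also have "\<dots> \<le> (\<Sum>i\<in>G. \<bar>F i p - F i q\<bar>)"
    by (rule sum_mono) (use assms(2) in \<open>auto simp: abs_mult intro: mult_left_le_one_le\<close>)
  also have "\<dots> \<le> (\<Sum>\<^sub>\<infinity>i. \<bar>F i p - F i q\<bar>)"
    by (rule finite_sum_le_infsum[OF babs assms(1)]) auto
  also have "\<dots> \<le> N * dist p q" by (rule babs_le)
  finally show "\<bar>(\<Sum>i\<in>G. c i * F i p) - (\<Sum>i\<in>G. c i * F i q)\<bar> \<le> N * dist p q" .
qed (use N1 in simp)

lemma fin_bound:
  fixes L :: "('a \<Rightarrow> real) \<Rightarrow> real"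
  assumes lin: "\<And>G c. finite G \<Longrightarrow> L (\<lambda>p. \<Sum>i\<in>G. c i * F i p) = (\<Sum>i\<in>G. c i * L (F i))"
    and bd: "\<And>g. g \<in> Lip0 x0 \<Longrightarrow> \<bar>L g\<bar> \<le> C * lipnorm g" and C: "0 \<le> C"
  shows "(\<lambda>i. \<bar>L (F i)\<bar>) summable_on UNIV" "(\<Sum>\<^sub>\<infinity>i. \<bar>L (F i)\<bar>) \<le> C * N"
proof -
  have "sum (\<lambda>i. \<bar>L (F i)\<bar>) G \<le> C * N" if G: "finite G" for G
  proof -
    define s where "s = (\<lambda>i. sgn (L (F i)))"
    have "sum (\<lambda>i. \<bar>L (F i)\<bar>) G = (\<Sum>i\<in>G. s i * L (F i))"
      unfolding s_def by (rule sum.cong) (auto simp: abs_sgn)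
    also have "\<dots> = L (\<lambda>p. \<Sum>i\<in>G. s i * F i p)" by (rule lin[OF G, symmetric])
    also have "\<dots> \<le> \<bar>L (\<lambda>p. \<Sum>i\<in>G. s i * F i p)\<bar>" by simp
    also have "\<dots> \<le> C * lipnorm (\<lambda>p. \<Sum>i\<in>G. s i * F i p)" by (rule bd[OF fincomb_Lip0[OF G]])
    also have "\<dots> \<le> C * N"
      by (rule mult_left_mono[OF fincomb_lipnorm[OF G] C]) (auto simp: s_def abs_sgn_eq)
    finally show ?thesis .
  qed
  then show "(\<lambda>i. \<bar>L (F i)\<bar>) summable_on UNIV" "(\<Sum>\<^sub>\<infinity>i. \<bar>L (F i)\<bar>) \<le> C * N"
    using infsum_le_real[of "\<lambda>i. \<bar>L (F i)\<bar>" "C * N"] by auto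
qed

end



definition evec :: "'i \<Rightarrow> 'i \<Rightarrow> real" where
  "evec i = (\<lambda>j. if j = i then 1 else 0)"

lemma evec_c0: "evec i \<in> c_0"
  by (rule finsupp_c0[of "{i}"]) (auto simp: evec_def)

lemma sum_evec: "(\<Sum>i\<in>G. c i * evec i j) = (if finite G \<and> j \<in> G then c j else 0)"
proof (cases "finite G")
  case True
  have "(\<Sum>i\<in>G. c i * evec i j) = (\<Sum>i\<in>G. if j = i then c i else 0)"
    by (rule sum.cong) (auto simp: evec_def)
  also have "\<dots> = (if j \<in> G then c j else 0)" using True by (simp add: sum.delta)
  finally show ?thesis using True by simp
qed simp

lemma summable_div:
  fixes g :: "'i \<Rightarrow> real"
  assumes "g summable_on A"
  shows "(\<lambda>i. g i / c) summable_on A" "(\<Sum>\<^sub>\<infinity>i\<in>A. g i / c) = (\<Sum>\<^sub>\<infinity>i\<in>A. g i) / c"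
proof -
  show "(\<lambda>i. g i / c) summable_on A" using summable_on_cmult_left[OF assms, of "1/c"] by simp
  show "(\<Sum>\<^sub>\<infinity>i\<in>A. g i / c) = (\<Sum>\<^sub>\<infinity>i\<in>A. g i) / c"
    using infsum_cmult_left[of "1/c" g A] assms by simp
qed

lemma linear_onD:
  "linear_on A L \<Longrightarrow> u \<in> A \<Longrightarrow> v \<in> A \<Longrightarrow> L (\<lambda>s. a * u s + b * v s) = (\<lambda>t. a * L u t + b * L v t)"
  unfolding linear_on_def by blast

lemma lin_zero:
  assumes "linear_on A L" "u \<in> A"
  shows "L (\<lambda>s. 0) = (\<lambda>t. 0)"
  using linear_onD[OF assms(1,2,2), of 0 0] by simp

lemma V_beurling:
  fixes R :: "('i \<Rightarrow> real) \<Rightarrow> ('a::metric_space \<Rightarrow> real)"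
  assumes A: "c_0 \<subseteq> A" "A \<subseteq> ell_inf" and lin: "linear_on A R" and img: "R ` A \<subseteq> Lip0 x0"
    and bd: "bounded_on A linf_norm lipnorm R" and TR: "\<forall>\<alpha>\<in>A. interp_op x y (R \<alpha>) = \<alpha>"
  shows "beurling_set x0 x y (opnorm_on A linf_norm lipnorm R) (\<lambda>i. R (evec i))"
proof -
  define N where "N = opnorm_on A linf_norm lipnorm R"
  have nA: "\<And>u. u \<in> A \<Longrightarrow> 0 \<le> linf_norm u" using A linf_nonneg by blast
  have N0: "0 \<le> N" unfolding N_def by (rule opnorm_nonneg[OF bd nA])
  have eA: "evec i \<in> A" for i using A(1) evec_c0[of i] by (rule subsetD)
  have RL: "R (evec i) \<in> Lip0 x0" for i using img eA[of i] by (rule subsetD[OF _ imageI])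
  have F0: "R (evec i) x0 = 0" for i using RL[of i] unfolding Lip0_def by simp
  have Fint: "(R (evec i) (x j) - R (evec i) (y j)) / dist (x j) (y j) = (if i = j then 1 else 0)" for i j
  proof -
    have "interp_op x y (R (evec i)) j = evec i j" using TR eA[of i] by simp
    then show ?thesis unfolding interp_op_def evec_def by auto
  qed
  have vA: "(\<lambda>j. \<Sum>i\<in>G. c i * evec i j) \<in> A" if "finite G" for G c
  proof -
    have "(\<lambda>j. \<Sum>i\<in>G. c i * evec i j) \<in> c_0"
      by (rule finsupp_c0[OF that]) (simp add: sum_evec)
    then show ?thesis using A(1) by (rule subsetD[rotated])
  qed
  have Rsum: "R (\<lambda>j. \<Sum>i\<in>G. c i * evec i j) = (\<lambda>p. \<Sum>i\<in>G. c i * R (evec i) p)" if "finite G" for G c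
    using that
  proof (induction G rule: finite_induct)
    case empty then show ?case using lin_zero[OF lin eA] by simp
  next
    case (insert k G)
    have "R (\<lambda>s. 1 * (\<Sum>i\<in>G. c i * evec i s) + c k * evec k s) =
      (\<lambda>t. 1 * R (\<lambda>j. \<Sum>i\<in>G. c i * evec i j) t + c k * R (evec k) t)"
      by (rule linear_onD[OF lin vA[OF insert(1)] eA])
    then show ?case using insert by (simp add: add.commute)
  qed
  have main: "(\<Sum>i\<in>G. \<bar>R (evec i) p - R (evec i) q\<bar>) \<le> N * dist p q" if G: "finite G" for G p q
  proof -
    define s where "s = (\<lambda>i. sgn (R (evec i) p - R (evec i) q))"
    define v where "v = (\<lambda>j. \<Sum>i\<in>G. s i * evec i j)"
    have v: "v \<in> A" unfolding v_def by (rule vA[OF G])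
    have vj: "v j = (if j \<in> G then s j else 0)" for j unfolding v_def using sum_evec[where G=G and c=s and j=j] G by simp
    have lv: "linf_norm v \<le> 1" by (rule linf_le) (auto simp: vj s_def abs_sgn_eq)
    have eq: "(\<Sum>i\<in>G. \<bar>R (evec i) p - R (evec i) q\<bar>) = R v p - R v q"
    proof -
      have "(\<Sum>i\<in>G. \<bar>R (evec i) p - R (evec i) q\<bar>) = (\<Sum>i\<in>G. s i * (R (evec i) p - R (evec i) q))"
        unfolding s_def by (rule sum.cong) (auto simp: abs_sgn)
      also have "\<dots> = (\<Sum>i\<in>G. s i * R (evec i) p) - (\<Sum>i\<in>G. s i * R (evec i) q)"
        by (simp add: sum_subtractf algebra_simps)
      also have "\<dots> = R v p - R v q" unfolding v_def Rsum[OF G] by simp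
      finally show ?thesis .
    qed
    show ?thesis
    proof (cases "linf_norm v = 0")
      case True
      have "s i = 0" if "i \<in> G" for i
      proof -
        have "\<bar>v i\<bar> \<le> 0" using linf_ge[of v i] A(2) v True by auto
        then show ?thesis using vj[of i] that by simp
      qed
      then have "(\<Sum>i\<in>G. \<bar>R (evec i) p - R (evec i) q\<bar>) = 0"
        unfolding eq v_def using lin_zero[OF lin v] by simp
      then show ?thesis using N0 by simp
    next
      case False
      then have lpos: "0 < linf_norm v" using nA[OF v] by simp
      have Rv: "R v \<in> Lip0 x0" using img v by (rule subsetD[OF _ imageI])
      have ob: "lipnorm (R v) \<le> N * linf_norm v" unfolding N_def
        by (rule opnorm_bound[OF bd]) (use nA v lpos in auto)
      have "R v p - R v q \<le> lipnorm (R v) * dist p q" using lipnorm_bound[OF Rv, of p q] by simp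
      also have "\<dots> \<le> (N * linf_norm v) * dist p q"
        by (rule mult_right_mono[OF ob]) simp
      also have "\<dots> \<le> N * dist p q"
        using mult_left_mono[OF lv N0] by (intro mult_right_mono) auto
      finally show ?thesis using eq by simp
    qed
  qed
  have "(\<lambda>i. \<bar>R (evec i) p - R (evec i) q\<bar> / dist p q) summable_on UNIV \<and>
        (\<Sum>\<^sub>\<infinity>i. \<bar>R (evec i) p - R (evec i) q\<bar> / dist p q) \<le> N" if pq: "p \<noteq> q" for p q
  proof -
    have d: "dist p q > 0" using pq by simp
    have "sum (\<lambda>i. \<bar>R (evec i) p - R (evec i) q\<bar> / dist p q) G \<le> N" if "finite G" for G
      using main[of G p q, OF that] d by (simp add: sum_divide_distrib[symmetric] divide_le_eq)
    moreover have "0 \<le> \<bar>R (evec i) p - R (evec i) q\<bar> / dist p q" for i by simp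
    ultimately show ?thesis using infsum_le_real[of "\<lambda>i. \<bar>R (evec i) p - R (evec i) q\<bar> / dist p q" N] by blast
  qed
  then show ?thesis unfolding beurling_set_def N_def[symmetric] using F0 Fint by simp
qed



lemma delta_x0: "delta x0 x0 = (\<lambda>s. 0)"
  unfolding delta_def Lip0_def by auto

lemma P_beurling:
  fixes P :: "(('a::metric_space \<Rightarrow> real) \<Rightarrow> real) \<Rightarrow> ('i \<Rightarrow> real)"
  assumes lin: "linear_on (free_space x0) P" and img: "P ` free_space x0 \<subseteq> ell_1"
    and bd: "bounded_on (free_space x0) (dual_norm x0) l1_norm P"
    and PS: "\<forall>\<mu>\<in>ell_1. P (synth_op x0 x y \<mu>) = \<mu>"
  shows "beurling_set x0 x y (opnorm_on (free_space x0) (dual_norm x0) l1_norm P) (\<lambda>i p. P (delta x0 p) i)"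
proof -
  define N where "N = opnorm_on (free_space x0) (dual_norm x0) l1_norm P"
  have F0: "P (delta x0 x0) i = 0" for i
    using lin_zero[OF lin delta_fs[of x0 x0]] unfolding delta_x0 by simp
  have Pmol: "P (mol x0 p q) = (\<lambda>t. (1 / dist p q) * P (delta x0 p) t + (- 1 / dist p q) * P (delta x0 q) t)" for p q
    unfolding mol_eq by (rule linear_onD[OF lin delta_fs delta_fs])
  have Fd: "(P (delta x0 p) i - P (delta x0 q) i) / dist p q = P (mol x0 p q) i" for p q i
    unfolding Pmol by (simp add: diff_divide_distrib)
  have Se: "synth_op x0 x y (evec j) = mol x0 (x j) (y j)" for j
  proof
    fix f
    have "synth_op x0 x y (evec j) f = (\<Sum>\<^sub>\<infinity>i. (if i = j then mol x0 (x i) (y i) f else 0))"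
      unfolding synth_op_def evec_def by (rule infsum_cong) simp
    also have "\<dots> = mol x0 (x j) (y j) f" by (rule infsum_single_real)
    finally show "synth_op x0 x y (evec j) f = mol x0 (x j) (y j) f" .
  qed
  have e1: "evec j \<in> ell_1" for j :: 'i
  proof -
    have "(\<lambda>i. \<bar>evec j i\<bar>) = (\<lambda>i. if i = j then 1 else 0)" by (auto simp: evec_def)
    then show ?thesis unfolding ell_1_def using summable_single_real[of j "\<lambda>_. 1" UNIV] by simp
  qed
  have Fint: "(P (delta x0 (x j)) i - P (delta x0 (y j)) i) / dist (x j) (y j) = (if i = j then 1 else 0)" for i j
  proof -
    have "P (synth_op x0 x y (evec j)) = evec j" using PS e1[of j] by blast
    then have "P (mol x0 (x j) (y j)) = evec j" unfolding Se .
    then show ?thesis unfolding Fd by (simp add: evec_def)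
  qed
  have "(\<lambda>i. \<bar>P (delta x0 p) i - P (delta x0 q) i\<bar> / dist p q) summable_on UNIV \<and>
        (\<Sum>\<^sub>\<infinity>i. \<bar>P (delta x0 p) i - P (delta x0 q) i\<bar> / dist p q) \<le> N" if pq: "p \<noteq> q" for p q
  proof -
    have d: "dist p q > 0" using pq by simp
    have eq: "(\<lambda>i. \<bar>P (delta x0 p) i - P (delta x0 q) i\<bar> / dist p q) = (\<lambda>i. \<bar>P (mol x0 p q) i\<bar>)"
    proof
      fix i
      have "\<bar>P (delta x0 p) i - P (delta x0 q) i\<bar> / dist p q = \<bar>(P (delta x0 p) i - P (delta x0 q) i) / dist p q\<bar>"
        using d by (simp add: abs_div)
      then show "\<bar>P (delta x0 p) i - P (delta x0 q) i\<bar> / dist p q = \<bar>P (mol x0 p q) i\<bar>" unfolding Fd .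
    qed
    have m: "mol x0 p q \<in> free_space x0" by (rule mol_fs[OF pq])
    have "P (mol x0 p q) \<in> ell_1" using img m by (rule subsetD[OF _ imageI])
    then have s: "(\<lambda>i. \<bar>P (mol x0 p q) i\<bar>) summable_on UNIV" unfolding ell_1_def by simp
    have "l1_norm (P (mol x0 p q)) \<le> N * dual_norm x0 (mol x0 p q)" unfolding N_def
      by (rule opnorm_bound[OF bd]) (use dual_nonneg m dual_mol[OF pq] in auto)
    then have "(\<Sum>\<^sub>\<infinity>i. \<bar>P (mol x0 p q) i\<bar>) \<le> N" unfolding l1_norm_def dual_mol[OF pq] by simp
    then show ?thesis unfolding eq using s by simp
  qed
  then show ?thesis unfolding beurling_set_def N_def[symmetric] using F0 Fint by simp
qed

lemma Q_beurling:
  fixes f :: "'a::metric_space \<Rightarrow> ('i \<Rightarrow> real)"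
  assumes l1: "\<forall>p. f p \<in> ell_1" and f0: "f x0 = (\<lambda>i. 0)"
    and K: "\<exists>K. \<forall>p q. l1_norm (\<lambda>i. f p i - f q i) \<le> K * dist p q"
    and fi: "\<forall>i. (\<lambda>j. (f (x i) j - f (y i) j) / dist (x i) (y i)) = (\<lambda>j. if j = i then 1 else 0)"
  shows "beurling_set x0 x y (lip_const l1_norm f (\<lambda>u v i. u i - v i)) (\<lambda>i p. f p i)"
proof -
  define N where "N = lip_const l1_norm f (\<lambda>u v i. u i - v i)"
  obtain K where K: "\<And>p q. l1_norm (\<lambda>i. f p i - f q i) \<le> K * dist p q" using K by blast
  have bdd: "bdd_above (insert 0 {l1_norm (\<lambda>i. f p i - f q i) / dist p q | p q. p \<noteq> q})"
  proof -
    have "l1_norm (\<lambda>i. f p i - f q i) / dist p q \<le> max K 0" if "p \<noteq> q" for p q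
    proof -
      have "dist p q > 0" using that by simp
      then have "l1_norm (\<lambda>i. f p i - f q i) / dist p q \<le> K" using K[of p q] by (simp add: divide_le_eq)
      then show ?thesis by simp
    qed
    then show ?thesis unfolding bdd_above_def by (intro exI[of _ "max K 0"]) auto
  qed
  have F0: "f x0 i = 0" for i using f0 by simp
  have Fint: "(f (x j) i - f (y j) i) / dist (x j) (y j) = (if i = j then 1 else 0)" for i j
    using fun_cong[OF fi[rule_format, of j], of i] by simp
  have "(\<lambda>i. \<bar>f p i - f q i\<bar> / dist p q) summable_on UNIV \<and>
        (\<Sum>\<^sub>\<infinity>i. \<bar>f p i - f q i\<bar> / dist p q) \<le> N" if pq: "p \<noteq> q" for p q
  proof -
    have sp: "(\<lambda>i. \<bar>f p i\<bar>) summable_on UNIV" using l1 unfolding ell_1_def by blast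
    have sq: "(\<lambda>i. \<bar>f q i\<bar>) summable_on UNIV" using l1 unfolding ell_1_def by blast
    have s: "(\<lambda>i. \<bar>f p i - f q i\<bar>) summable_on UNIV"
      by (rule summable_on_comparison_test[OF summable_on_add[OF sp sq]]) auto
    have "(\<Sum>\<^sub>\<infinity>i. \<bar>f p i - f q i\<bar> / dist p q) = l1_norm (\<lambda>i. f p i - f q i) / dist p q"
      unfolding l1_norm_def by (rule summable_div(2)[OF s])
    also have "\<dots> \<le> N" unfolding N_def lip_const_def
      by (rule cSup_upper) (use pq bdd in auto)
    finally show ?thesis using summable_div(1)[OF s] by simp
  qed
  then show ?thesis unfolding beurling_set_def N_def[symmetric] using F0 Fint by simp
qed

lemma beurling_mono: "beurling_set x0 x y N F \<Longrightarrow> N \<le> N' \<Longrightarrow> beurling_set x0 x y N' F"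
  unfolding beurling_set_def by (meson order_trans)

lemma linear_on_mono: "linear_on A L \<Longrightarrow> B \<subseteq> A \<Longrightarrow> linear_on B L"
  unfolding linear_on_def by blast

lemma bounded_on_mono: "bounded_on A nA nB L \<Longrightarrow> B \<subseteq> A \<Longrightarrow> bounded_on B nA nB L"
  unfolding bounded_on_def by blast

context beur
begin

lemma Rb_bounded: "bounded_on A linf_norm lipnorm Rb" if "A \<subseteq> ell_inf"
  unfolding bounded_on_def using Rb_lipnorm that by (intro exI[of _ N]) (auto simp: mult.commute)

lemma Rb_opnorm: "opnorm_on A linf_norm lipnorm Rb \<le> N" if A: "A \<subseteq> ell_inf"
proof (rule opnorm_le)
  fix u assume "u \<in> A" then have u: "u \<in> ell_inf" using A by blast
  show "lipnorm (Rb u) \<le> N * linf_norm u" using Rb_lipnorm[OF u] by (simp add: mult.commute)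
qed (use N1 A linf_nonneg in auto)

definition Pb :: "(('a \<Rightarrow> real) \<Rightarrow> real) \<Rightarrow> 'i \<Rightarrow> real" where
  "Pb \<phi> = (\<lambda>i. \<phi> (F i))"

lemma fs_fin:
  assumes "\<phi> \<in> free_space x0"
  shows "(\<lambda>i. \<bar>\<phi> (F i)\<bar>) summable_on UNIV" "(\<Sum>\<^sub>\<infinity>i. \<bar>\<phi> (F i)\<bar>) \<le> dual_norm x0 \<phi> * N"
  by (rule fin_bound[where L=\<phi>, OF fs_sum[OF assms] fs_bound[OF assms] dual_nonneg[OF assms]], auto intro: FLip0)+

lemma Pb_props:
  "linear_on (free_space x0) Pb" "Pb ` free_space x0 \<subseteq> ell_1"
  "bounded_on (free_space x0) (dual_norm x0) l1_norm Pb"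
  "opnorm_on (free_space x0) (dual_norm x0) l1_norm Pb \<le> N"
  "\<forall>\<mu>\<in>ell_1. Pb (synth_op x0 x y \<mu>) = \<mu>"
proof -
  show "linear_on (free_space x0) Pb" unfolding linear_on_def Pb_def by simp
  show "Pb ` free_space x0 \<subseteq> ell_1" unfolding Pb_def ell_1_def using fs_fin(1) by blast
  have bnd: "l1_norm (Pb \<phi>) \<le> N * dual_norm x0 \<phi>" if "\<phi> \<in> free_space x0" for \<phi>
    using fs_fin(2)[OF that] unfolding l1_norm_def Pb_def by (simp add: mult.commute)
  show "bounded_on (free_space x0) (dual_norm x0) l1_norm Pb" unfolding bounded_on_def
    using bnd by blast
  show "opnorm_on (free_space x0) (dual_norm x0) l1_norm Pb \<le> N"
    by (rule opnorm_le) (use bnd N1 dual_nonneg in auto)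
  show "\<forall>\<mu>\<in>ell_1. Pb (synth_op x0 x y \<mu>) = \<mu>"
  proof (intro ballI ext)
    fix \<mu> :: "'i \<Rightarrow> real" and i
    have "Pb (synth_op x0 x y \<mu>) i = (\<Sum>\<^sub>\<infinity>j. (if j = i then \<mu> j else 0))"
      unfolding Pb_def synth_op_def
    proof (rule infsum_cong)
      fix j
      have "mol x0 (x j) (y j) (F i) = (F i (x j) - F i (y j)) / dist (x j) (y j)"
        unfolding mol_def delta_def using FLip0[of i] by simp
      then show "\<mu> j * mol x0 (x j) (y j) (F i) = (if j = i then \<mu> j else 0)"
        using Fint[of i j] by auto
    qed
    also have "\<dots> = \<mu> i" by (rule infsum_single_real)
    finally show "Pb (synth_op x0 x y \<mu>) i = \<mu> i" .
  qed
qed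

definition fb :: "'a \<Rightarrow> 'i \<Rightarrow> real" where
  "fb p = (\<lambda>i. F i p)"

lemma fb_props:
  "\<forall>p. fb p \<in> ell_1" "fb x0 = (\<lambda>i. 0)"
  "\<exists>K. \<forall>p q. l1_norm (\<lambda>i. fb p i - fb q i) \<le> K * dist p q"
  "lip_const l1_norm fb (\<lambda>u v i. u i - v i) \<le> N"
  "\<forall>i. (\<lambda>j. (fb (x i) j - fb (y i) j) / dist (x i) (y i)) = (\<lambda>j. if j = i then 1 else 0)"
proof -
  show "\<forall>p. fb p \<in> ell_1" unfolding fb_def ell_1_def using bpt by blast
  show "fb x0 = (\<lambda>i. 0)" unfolding fb_def using F0 by simp
  have b: "l1_norm (\<lambda>i. fb p i - fb q i) \<le> N * dist p q" for p q
    unfolding l1_norm_def fb_def by (rule babs_le)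
  then show "\<exists>K. \<forall>p q. l1_norm (\<lambda>i. fb p i - fb q i) \<le> K * dist p q" by blast
  show "lip_const l1_norm fb (\<lambda>u v i. u i - v i) \<le> N" unfolding lip_const_def
  proof (rule cSup_least)
    fix z assume "z \<in> insert 0 {l1_norm ((\<lambda>u v i. u i - v i) (fb p) (fb q)) / dist p q |p q. p \<noteq> q}"
    then show "z \<le> N"
    proof
      assume "z = 0" then show ?thesis using N1 by simp
    next
      assume "z \<in> {l1_norm ((\<lambda>u v i. u i - v i) (fb p) (fb q)) / dist p q |p q. p \<noteq> q}"
      then obtain p q where pq: "p \<noteq> q" "z = l1_norm (\<lambda>i. fb p i - fb q i) / dist p q" by auto
      then have "dist p q > 0" by simp
      then show ?thesis using pq b[of p q] by (simp add: divide_le_eq)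
    qed
  qed simp
  show "\<forall>i. (\<lambda>j. (fb (x i) j - fb (y i) j) / dist (x i) (y i)) = (\<lambda>j. if j = i then 1 else 0)"
    unfolding fb_def using Fint by auto
qed

end



lemma infsum_sum_swap:
  fixes g :: "'p \<Rightarrow> 'i \<Rightarrow> real"
  assumes "finite A" "\<And>p. p \<in> A \<Longrightarrow> g p summable_on UNIV"
  shows "(\<lambda>i. \<Sum>p\<in>A. g p i) summable_on UNIV \<and> (\<Sum>\<^sub>\<infinity>i. \<Sum>p\<in>A. g p i) = (\<Sum>p\<in>A. \<Sum>\<^sub>\<infinity>i. g p i)"
  using assms
proof (induction A rule: finite_induct)
  case empty then show ?case by simp
next
  case (insert k A)
  then have IH: "(\<lambda>i. \<Sum>p\<in>A. g p i) summable_on UNIV" "(\<Sum>\<^sub>\<infinity>i. \<Sum>p\<in>A. g p i) = (\<Sum>p\<in>A. \<Sum>\<^sub>\<infinity>i. g p i)"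
    by auto
  have gk: "g k summable_on UNIV" using insert by auto
  have "(\<lambda>i. g k i + (\<Sum>p\<in>A. g p i)) summable_on UNIV" by (rule summable_on_add[OF gk IH(1)])
  moreover have "(\<Sum>\<^sub>\<infinity>i. g k i + (\<Sum>p\<in>A. g p i)) = (\<Sum>\<^sub>\<infinity>i. g k i) + (\<Sum>\<^sub>\<infinity>i. \<Sum>p\<in>A. g p i)"
    by (rule infsum_add[OF gk IH(1)])
  ultimately show ?case using insert IH(2) by simp
qed

lemma topspace_wstar_linf: "topspace wstar_linf = ell_inf"
proof -
  have "(\<lambda>i. 0) \<in> (ell_1 :: ('i \<Rightarrow> real) set)" unfolding ell_1_def by simp
  then have "ell_inf \<in> {{\<alpha>\<in>ell_inf. (\<Sum>\<^sub>\<infinity>i. \<alpha> i * \<mu> i) \<in> U} | \<mu> U. \<mu> \<in> ell_1 \<and> open U}"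
    by (intro CollectI exI[of _ "\<lambda>i::'i. 0::real"] exI[of _ UNIV]) auto
  then show ?thesis unfolding wstar_linf_def topology_generated_by_topspace by blast
qed

lemma topspace_wstar_lip: "topspace (wstar_lip x0) = Lip0 x0"
proof -
  have "Lip0 x0 \<in> {{f\<in>Lip0 x0. \<phi> f \<in> U} | \<phi> U. \<phi> \<in> free_space x0 \<and> open U}"
    by (intro CollectI exI[of _ "delta x0 x0"] exI[of _ UNIV]) (auto simp: delta_fs)
  then show ?thesis unfolding wstar_lip_def topology_generated_by_topspace by blast
qed

context beur
begin

lemma key:
  assumes phi: "\<phi> \<in> free_space x0" and a: "\<alpha> \<in> ell_inf"
  shows "\<phi> (Rb \<alpha>) = (\<Sum>\<^sub>\<infinity>i. \<alpha> i * \<phi> (F i))"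
proof -
  define C where "C = lipnorm (Rb \<alpha>) + linf_norm \<alpha> * N"
  have C: "0 \<le> C" unfolding C_def using lipnorm_nonneg[OF Rb_Lip0[OF a]] linf_nonneg[OF a] N1 by simp
  have "\<bar>\<phi> (Rb \<alpha>) - (\<Sum>\<^sub>\<infinity>i. \<alpha> i * \<phi> (F i))\<bar> \<le> \<epsilon> * C" if e: "\<epsilon> > 0" for \<epsilon>
  proof -
    obtain \<psi> where \<psi>: "\<psi> \<in> delta_span x0" "\<And>f. f \<in> Lip0 x0 \<Longrightarrow> \<bar>\<phi> f - \<psi> f\<bar> \<le> \<epsilon> * lipnorm f"
      using fs_approx[OF phi e] by blast
    have psi: "\<psi> \<in> free_space x0" by (rule delta_span_fs[OF \<psi>(1)])
    obtain A c where \<psi>': "\<psi> = (\<lambda>f. \<Sum>p\<in>A. c p * delta x0 p f)" "finite A"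
      using \<psi>(1) unfolding delta_span_def by blast
    have sF: "(\<lambda>i. \<alpha> i * F i p) summable_on UNIV" for p by (rule ell_inf_summable[OF a bpt])
    have a1: "\<psi> (Rb \<alpha>) = (\<Sum>\<^sub>\<infinity>i. \<alpha> i * \<psi> (F i))"
    proof -
      have "\<psi> (Rb \<alpha>) = (\<Sum>p\<in>A. c p * (\<Sum>\<^sub>\<infinity>i. \<alpha> i * F i p))"
        unfolding \<psi>'(1) using Rb_Lip0[OF a] by (simp add: delta_Lip0 Rb_def)
      also have "\<dots> = (\<Sum>p\<in>A. (\<Sum>\<^sub>\<infinity>i. c p * (\<alpha> i * F i p)))"
        by (rule sum.cong) (auto simp: infsum_cmult_right[OF sF])
      also have "\<dots> = (\<Sum>\<^sub>\<infinity>i. \<Sum>p\<in>A. c p * (\<alpha> i * F i p))"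
        using infsum_sum_swap[OF \<psi>'(2), of "\<lambda>p i. c p * (\<alpha> i * F i p)"] summable_on_cmult_right[OF sF]
        by simp
      also have "\<dots> = (\<Sum>\<^sub>\<infinity>i. \<alpha> i * \<psi> (F i))"
        unfolding \<psi>'(1) using FLip0 by (simp add: delta_Lip0 sum_distrib_left algebra_simps)
      finally show ?thesis .
    qed
    define L where "L = (\<lambda>g. \<phi> g - \<psi> g)"
    have Llin: "L (\<lambda>p. \<Sum>i\<in>G. c i * F i p) = (\<Sum>i\<in>G. c i * L (F i))" if "finite G" for G c
      unfolding L_def using fs_sum[OF phi that, of F c] fs_sum[OF psi that, of F c] FLip0
      by (simp add: sum_subtractf right_diff_distrib)
    have Lbd: "\<bar>L g\<bar> \<le> \<epsilon> * lipnorm g" if "g \<in> Lip0 x0" for g unfolding L_def by (rule \<psi>(2)[OF that])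
    have Ls: "(\<lambda>i. \<bar>L (F i)\<bar>) summable_on UNIV" "(\<Sum>\<^sub>\<infinity>i. \<bar>L (F i)\<bar>) \<le> \<epsilon> * N"
      using fin_bound[where L=L and C=\<epsilon>, OF Llin Lbd] e by auto
    have s1: "(\<lambda>i. \<alpha> i * \<phi> (F i)) summable_on UNIV" by (rule ell_inf_summable[OF a fs_fin(1)[OF phi]])
    have s2: "(\<lambda>i. \<alpha> i * \<psi> (F i)) summable_on UNIV" by (rule ell_inf_summable[OF a fs_fin(1)[OF psi]])
    have "(\<Sum>\<^sub>\<infinity>i. \<alpha> i * \<phi> (F i)) - (\<Sum>\<^sub>\<infinity>i. \<alpha> i * \<psi> (F i)) = (\<Sum>\<^sub>\<infinity>i. \<alpha> i * L (F i))"
      unfolding L_def by (subst infsum_diff_real[OF s1 s2, symmetric]) (simp add: right_diff_distrib)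
    also have "\<bar>\<dots>\<bar> \<le> linf_norm \<alpha> * (\<Sum>\<^sub>\<infinity>i. \<bar>L (F i)\<bar>)" by (rule ell_inf_bound[OF a Ls(1)])
    also have "\<dots> \<le> linf_norm \<alpha> * (\<epsilon> * N)" by (rule mult_left_mono[OF Ls(2) linf_nonneg[OF a]])
    finally have b2: "\<bar>(\<Sum>\<^sub>\<infinity>i. \<alpha> i * \<phi> (F i)) - (\<Sum>\<^sub>\<infinity>i. \<alpha> i * \<psi> (F i))\<bar> \<le> linf_norm \<alpha> * (\<epsilon> * N)" .
    have b1: "\<bar>\<phi> (Rb \<alpha>) - \<psi> (Rb \<alpha>)\<bar> \<le> \<epsilon> * lipnorm (Rb \<alpha>)" by (rule \<psi>(2)[OF Rb_Lip0[OF a]])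
    have "\<bar>\<phi> (Rb \<alpha>) - (\<Sum>\<^sub>\<infinity>i. \<alpha> i * \<phi> (F i))\<bar> \<le> \<epsilon> * lipnorm (Rb \<alpha>) + linf_norm \<alpha> * (\<epsilon> * N)"
      using b1 b2 a1 by linarith
    also have "\<dots> = \<epsilon> * C" unfolding C_def by (simp add: algebra_simps)
    finally show ?thesis .
  qed
  then have "\<bar>\<phi> (Rb \<alpha>) - (\<Sum>\<^sub>\<infinity>i. \<alpha> i * \<phi> (F i))\<bar> \<le> 0" using eps_le0[OF _ C] by blast
  then show ?thesis by simp
qed

lemma Rb_cont: "continuous_map wstar_linf (wstar_lip x0) Rb"
  unfolding wstar_lip_def
proof (rule continuous_on_generated_topo)
  fix V assume "V \<in> {{f\<in>Lip0 x0. \<phi> f \<in> U} | \<phi> U. \<phi> \<in> free_space x0 \<and> open U}"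
  then obtain \<phi> U where V: "V = {f\<in>Lip0 x0. \<phi> f \<in> U}" and phi: "\<phi> \<in> free_space x0" and U: "open U"
    by blast
  have "Rb -` V \<inter> topspace wstar_linf = {\<alpha>\<in>ell_inf. (\<Sum>\<^sub>\<infinity>i. \<alpha> i * Pb \<phi> i) \<in> U}"
    unfolding topspace_wstar_linf V Pb_def using key[OF phi] Rb_Lip0 by auto
  moreover have "Pb \<phi> \<in> ell_1" using Pb_props(2) phi by blast
  ultimately show "openin wstar_linf (Rb -` V \<inter> topspace wstar_linf)"
    unfolding wstar_linf_def using U by (intro topology_generated_by_Basis) auto
next
  show "Rb ` topspace wstar_linf \<subseteq> \<Union> {{f\<in>Lip0 x0. \<phi> f \<in> U} | \<phi> U. \<phi> \<in> free_space x0 \<and> open U}"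
    using topspace_wstar_lip[of x0] Rb_Lip0 unfolding topspace_wstar_linf wstar_lip_def
    by (simp add: image_subset_iff)
qed

end


theorem theorem3p12:
  fixes x0 :: "'a::metric_space" and x y :: "'i \<Rightarrow> 'a" and M :: real
  assumes interp: "lip_interpolating x0 x y"
    and M_def: "M = interp_const x0 x y"
  defines "T \<equiv> interp_op x y" and "S \<equiv> synth_op x0 x y"
  shows
   "let
      c1 = (\<exists>F. beurling_set x0 x y M F);
      c2 = (\<exists>R :: ('i \<Rightarrow> real) \<Rightarrow> ('a \<Rightarrow> real).
              linear_on ell_inf R \<and> R ` ell_inf \<subseteq> Lip0 x0 \<and>
              bounded_on ell_inf linf_norm lipnorm R \<and>
              continuous_map wstar_linf (wstar_lip x0) R \<and>
              opnorm_on ell_inf linf_norm lipnorm R = M \<and>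
              (\<forall>\<alpha>\<in>ell_inf. T (R \<alpha>) = \<alpha>));
      c3 = (\<exists>P :: (('a \<Rightarrow> real) \<Rightarrow> real) \<Rightarrow> ('i \<Rightarrow> real).
              linear_on (free_space x0) P \<and> P ` free_space x0 \<subseteq> ell_1 \<and>
              bounded_on (free_space x0) (dual_norm x0) l1_norm P \<and>
              opnorm_on (free_space x0) (dual_norm x0) l1_norm P = M \<and>
              (\<forall>\<mu>\<in>ell_1. P (S \<mu>) = \<mu>));
      c4 = (\<exists>f :: 'a \<Rightarrow> ('i \<Rightarrow> real).
              (\<forall>p. f p \<in> ell_1) \<and> f x0 = (\<lambda>i. 0) \<and>
              (\<exists>K. \<forall>p q. l1_norm (\<lambda>i. f p i - f q i) \<le> K * dist p q) \<and>
              lip_const l1_norm f (\<lambda>u v i. u i - v i) = M \<and>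
              (\<forall>i. (\<lambda>j. (f (x i) j - f (y i) j) / dist (x i) (y i)) = (\<lambda>j. if j = i then 1 else 0)));
      c5 = (\<exists>R0 :: ('i \<Rightarrow> real) \<Rightarrow> ('a \<Rightarrow> real).
              linear_on c_0 R0 \<and> R0 ` c_0 \<subseteq> Lip0 x0 \<and>
              bounded_on c_0 linf_norm lipnorm R0 \<and>
              opnorm_on c_0 linf_norm lipnorm R0 \<le> M \<and>
              (\<forall>\<alpha>\<in>c_0. T (R0 \<alpha>) = \<alpha>))
    in (c1 \<longleftrightarrow> c2) \<and> (c1 \<longleftrightarrow> c3) \<and> (c1 \<longleftrightarrow> c4) \<and> (c1 \<longleftrightarrow> c5)"
proof -
  have IL: "interp_const x0 x y \<le> N" if "beurling_set x0 x y N F" for N and F :: "'i \<Rightarrow> 'a \<Rightarrow> real"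
    by (rule beur.interp_le[OF beur.intro[OF that]])
  have ROK: "R ` c_0 \<subseteq> Lip0 x0" if "R ` ell_inf \<subseteq> Lip0 x0" for R :: "('i \<Rightarrow> real) \<Rightarrow> ('a \<Rightarrow> real)"
    using that c0_sub by blast
  show ?thesis unfolding Let_def T_def S_def
  proof (intro conjI)
    show "(\<exists>F. beurling_set x0 x y M F) \<longleftrightarrow> (\<exists>R :: ('i \<Rightarrow> real) \<Rightarrow> ('a \<Rightarrow> real).
              linear_on ell_inf R \<and> R ` ell_inf \<subseteq> Lip0 x0 \<and>
              bounded_on ell_inf linf_norm lipnorm R \<and>
              continuous_map wstar_linf (wstar_lip x0) R \<and>
              opnorm_on ell_inf linf_norm lipnorm R = M \<and>
              (\<forall>\<alpha>\<in>ell_inf. interp_op x y (R \<alpha>) = \<alpha>))"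
    proof
      assume "\<exists>F. beurling_set x0 x y M F"
      then obtain F where B: "beurling_set x0 x y M F" by blast
      interpret b: beur x0 x y M F by (rule beur.intro[OF B])
      have l: "linear_on ell_inf b.Rb" by (rule b.Rb_lin)
      have i: "b.Rb ` ell_inf \<subseteq> Lip0 x0" using b.Rb_Lip0 by blast
      have bd: "bounded_on ell_inf linf_norm lipnorm b.Rb" by (rule b.Rb_bounded) simp
      have t: "\<forall>\<alpha>\<in>ell_inf. interp_op x y (b.Rb \<alpha>) = \<alpha>" using b.Rb_T by blast
      have "M \<le> opnorm_on ell_inf linf_norm lipnorm b.Rb"
        unfolding M_def by (rule IL[OF V_beurling[OF c0_sub order_refl l i bd t]])
      moreover have "opnorm_on ell_inf linf_norm lipnorm b.Rb \<le> M" by (rule b.Rb_opnorm) simp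
      ultimately show "\<exists>R :: ('i \<Rightarrow> real) \<Rightarrow> ('a \<Rightarrow> real).
              linear_on ell_inf R \<and> R ` ell_inf \<subseteq> Lip0 x0 \<and>
              bounded_on ell_inf linf_norm lipnorm R \<and>
              continuous_map wstar_linf (wstar_lip x0) R \<and>
              opnorm_on ell_inf linf_norm lipnorm R = M \<and>
              (\<forall>\<alpha>\<in>ell_inf. interp_op x y (R \<alpha>) = \<alpha>)"
        using l i bd t b.Rb_cont by (intro exI[of _ b.Rb]) simp
    next
      assume "\<exists>R :: ('i \<Rightarrow> real) \<Rightarrow> ('a \<Rightarrow> real).
              linear_on ell_inf R \<and> R ` ell_inf \<subseteq> Lip0 x0 \<and>
              bounded_on ell_inf linf_norm lipnorm R \<and>
              continuous_map wstar_linf (wstar_lip x0) R \<and>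
              opnorm_on ell_inf linf_norm lipnorm R = M \<and>
              (\<forall>\<alpha>\<in>ell_inf. interp_op x y (R \<alpha>) = \<alpha>)"
      then obtain R :: "('i \<Rightarrow> real) \<Rightarrow> ('a \<Rightarrow> real)" where R: "linear_on ell_inf R" "R ` ell_inf \<subseteq> Lip0 x0"
        "bounded_on ell_inf linf_norm lipnorm R" "opnorm_on ell_inf linf_norm lipnorm R = M"
        "\<forall>\<alpha>\<in>ell_inf. interp_op x y (R \<alpha>) = \<alpha>" by blast
      show "\<exists>F. beurling_set x0 x y M F"
        using V_beurling[OF c0_sub order_refl R(1,2,3,5)] R(4) by auto
    qed
  next
    show "(\<exists>F. beurling_set x0 x y M F) \<longleftrightarrow> (\<exists>P :: (('a \<Rightarrow> real) \<Rightarrow> real) \<Rightarrow> ('i \<Rightarrow> real).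
              linear_on (free_space x0) P \<and> P ` free_space x0 \<subseteq> ell_1 \<and>
              bounded_on (free_space x0) (dual_norm x0) l1_norm P \<and>
              opnorm_on (free_space x0) (dual_norm x0) l1_norm P = M \<and>
              (\<forall>\<mu>\<in>ell_1. P (synth_op x0 x y \<mu>) = \<mu>))"
    proof
      assume "\<exists>F. beurling_set x0 x y M F"
      then obtain F where B: "beurling_set x0 x y M F" by blast
      interpret b: beur x0 x y M F by (rule beur.intro[OF B])
      have "M \<le> opnorm_on (free_space x0) (dual_norm x0) l1_norm b.Pb"
        unfolding M_def by (rule IL[OF P_beurling[OF b.Pb_props(1,2,3,5)]])
      then show "\<exists>P :: (('a \<Rightarrow> real) \<Rightarrow> real) \<Rightarrow> ('i \<Rightarrow> real).
              linear_on (free_space x0) P \<and> P ` free_space x0 \<subseteq> ell_1 \<and>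
              bounded_on (free_space x0) (dual_norm x0) l1_norm P \<and>
              opnorm_on (free_space x0) (dual_norm x0) l1_norm P = M \<and>
              (\<forall>\<mu>\<in>ell_1. P (synth_op x0 x y \<mu>) = \<mu>)"
        using b.Pb_props by (intro exI[of _ b.Pb]) auto
    next
      assume "\<exists>P :: (('a \<Rightarrow> real) \<Rightarrow> real) \<Rightarrow> ('i \<Rightarrow> real).
              linear_on (free_space x0) P \<and> P ` free_space x0 \<subseteq> ell_1 \<and>
              bounded_on (free_space x0) (dual_norm x0) l1_norm P \<and>
              opnorm_on (free_space x0) (dual_norm x0) l1_norm P = M \<and>
              (\<forall>\<mu>\<in>ell_1. P (synth_op x0 x y \<mu>) = \<mu>)"
      then obtain P :: "(('a \<Rightarrow> real) \<Rightarrow> real) \<Rightarrow> ('i \<Rightarrow> real)" where P: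
        "linear_on (free_space x0) P" "P ` free_space x0 \<subseteq> ell_1"
        "bounded_on (free_space x0) (dual_norm x0) l1_norm P"
        "opnorm_on (free_space x0) (dual_norm x0) l1_norm P = M"
        "\<forall>\<mu>\<in>ell_1. P (synth_op x0 x y \<mu>) = \<mu>" by blast
      show "\<exists>F. beurling_set x0 x y M F"
        using P_beurling[OF P(1,2,3,5)] P(4) by auto
    qed
  next
    show "(\<exists>F. beurling_set x0 x y M F) \<longleftrightarrow> (\<exists>f :: 'a \<Rightarrow> ('i \<Rightarrow> real).
              (\<forall>p. f p \<in> ell_1) \<and> f x0 = (\<lambda>i. 0) \<and>
              (\<exists>K. \<forall>p q. l1_norm (\<lambda>i. f p i - f q i) \<le> K * dist p q) \<and>
              lip_const l1_norm f (\<lambda>u v i. u i - v i) = M \<and>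
              (\<forall>i. (\<lambda>j. (f (x i) j - f (y i) j) / dist (x i) (y i)) = (\<lambda>j. if j = i then 1 else 0)))"
    proof
      assume "\<exists>F. beurling_set x0 x y M F"
      then obtain F where B: "beurling_set x0 x y M F" by blast
      interpret b: beur x0 x y M F by (rule beur.intro[OF B])
      have "M \<le> lip_const l1_norm b.fb (\<lambda>u v i. u i - v i)"
        unfolding M_def by (rule IL[OF Q_beurling[OF b.fb_props(1,2,3,5)]])
      then show "\<exists>f :: 'a \<Rightarrow> ('i \<Rightarrow> real).
              (\<forall>p. f p \<in> ell_1) \<and> f x0 = (\<lambda>i. 0) \<and>
              (\<exists>K. \<forall>p q. l1_norm (\<lambda>i. f p i - f q i) \<le> K * dist p q) \<and>
              lip_const l1_norm f (\<lambda>u v i. u i - v i) = M \<and>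
              (\<forall>i. (\<lambda>j. (f (x i) j - f (y i) j) / dist (x i) (y i)) = (\<lambda>j. if j = i then 1 else 0))"
        using b.fb_props by (intro exI[of _ b.fb]) auto
    next
      assume "\<exists>f :: 'a \<Rightarrow> ('i \<Rightarrow> real).
              (\<forall>p. f p \<in> ell_1) \<and> f x0 = (\<lambda>i. 0) \<and>
              (\<exists>K. \<forall>p q. l1_norm (\<lambda>i. f p i - f q i) \<le> K * dist p q) \<and>
              lip_const l1_norm f (\<lambda>u v i. u i - v i) = M \<and>
              (\<forall>i. (\<lambda>j. (f (x i) j - f (y i) j) / dist (x i) (y i)) = (\<lambda>j. if j = i then 1 else 0))"
      then obtain f :: "'a \<Rightarrow> ('i \<Rightarrow> real)" where f: "\<forall>p. f p \<in> ell_1" "f x0 = (\<lambda>i. 0)"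
        "\<exists>K. \<forall>p q. l1_norm (\<lambda>i. f p i - f q i) \<le> K * dist p q"
        "lip_const l1_norm f (\<lambda>u v i. u i - v i) = M"
        "\<forall>i. (\<lambda>j. (f (x i) j - f (y i) j) / dist (x i) (y i)) = (\<lambda>j. if j = i then 1 else 0)" by blast
      show "\<exists>F. beurling_set x0 x y M F"
        using Q_beurling[OF f(1,2,3,5)] f(4) by auto
    qed
  next
    show "(\<exists>F. beurling_set x0 x y M F) \<longleftrightarrow> (\<exists>R0 :: ('i \<Rightarrow> real) \<Rightarrow> ('a \<Rightarrow> real).
              linear_on c_0 R0 \<and> R0 ` c_0 \<subseteq> Lip0 x0 \<and>
              bounded_on c_0 linf_norm lipnorm R0 \<and>
              opnorm_on c_0 linf_norm lipnorm R0 \<le> M \<and>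
              (\<forall>\<alpha>\<in>c_0. interp_op x y (R0 \<alpha>) = \<alpha>))"
    proof
      assume "\<exists>F. beurling_set x0 x y M F"
      then obtain F where B: "beurling_set x0 x y M F" by blast
      interpret b: beur x0 x y M F by (rule beur.intro[OF B])
      have l: "linear_on c_0 b.Rb" by (rule linear_on_mono[OF b.Rb_lin c0_sub])
      have i: "b.Rb ` c_0 \<subseteq> Lip0 x0" using b.Rb_Lip0 c0_sub by blast
      have bd: "bounded_on c_0 linf_norm lipnorm b.Rb" by (rule b.Rb_bounded[OF c0_sub])
      have t: "\<forall>\<alpha>\<in>c_0. interp_op x y (b.Rb \<alpha>) = \<alpha>" using b.Rb_T c0_sub by blast
      show "\<exists>R0 :: ('i \<Rightarrow> real) \<Rightarrow> ('a \<Rightarrow> real).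
              linear_on c_0 R0 \<and> R0 ` c_0 \<subseteq> Lip0 x0 \<and>
              bounded_on c_0 linf_norm lipnorm R0 \<and>
              opnorm_on c_0 linf_norm lipnorm R0 \<le> M \<and>
              (\<forall>\<alpha>\<in>c_0. interp_op x y (R0 \<alpha>) = \<alpha>)"
        using l i bd t b.Rb_opnorm[OF c0_sub] by (intro exI[of _ b.Rb]) simp
    next
      assume "\<exists>R0 :: ('i \<Rightarrow> real) \<Rightarrow> ('a \<Rightarrow> real).
              linear_on c_0 R0 \<and> R0 ` c_0 \<subseteq> Lip0 x0 \<and>
              bounded_on c_0 linf_norm lipnorm R0 \<and>
              opnorm_on c_0 linf_norm lipnorm R0 \<le> M \<and>
              (\<forall>\<alpha>\<in>c_0. interp_op x y (R0 \<alpha>) = \<alpha>)"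
      then obtain R :: "('i \<Rightarrow> real) \<Rightarrow> ('a \<Rightarrow> real)" where R: "linear_on c_0 R" "R ` c_0 \<subseteq> Lip0 x0"
        "bounded_on c_0 linf_norm lipnorm R" "opnorm_on c_0 linf_norm lipnorm R \<le> M"
        "\<forall>\<alpha>\<in>c_0. interp_op x y (R \<alpha>) = \<alpha>" by blast
      show "\<exists>F. beurling_set x0 x y M F"
        using beurling_mono[OF V_beurling[OF order_refl c0_sub R(1,2,3,5)] R(4)] by blast
    qed
  qed
qed

end
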